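(* Let $\sigma$ be any feasible non-anticipative online admission policy for the single-resource admission control model described in the context, and let $x^\sigma_t\in[0,1]$ be the admission probability it prescribes at time $t$ (equal to $0$ whenever no unit is available). Then $$\mathsf{FLU}\;\ge\;\liminf_{T\to\infty}\frac1T\,\mathbb E_\sigma\!\left[\int_0^T \lambda\, g(x^\sigma_t)\,dt\right].$$
   Context: Model: a single reusable resource has $c\in\mathbb N$ identical units. Customers arrive according to a Poisson process of rate $\lambda>0$. Over continuous time the decision-maker chooses an admission probability $x(t)\in[0,1]$, which may depend on the whole history (number of available units, how long each unavailable unit has been in use, etc.) but not on the future; when no unit is available, $x(t)=0$. An arriving customer is admitted with probability $x(t)$ (so admissions occur at rate $\lambda x(t)$ while stock is available); an admitted customer occupies one unit for a usage duration drawn i.i.d. from a distribution $G$ with $G(0)=0$ and finite mean $d>0$, independent of everything else; service is non-preemptive and the realized duration is not known until it ends. The instantaneous reward rate is $\lambda g(x(t))$, where $g:[0,1]\to\mathbb R$ is concave, non-decreasing and continuous with $g(0)=0$. Assume $x^*:=c/(\lambda d)<1$. The fluid relaxation value is $\mathsf{FLU}=\max\{\lambda g(x): x\in[0,1],\ \lambda x d\le c\}=\lambda g(x^* )$. *)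

theory Defs
  imports "HOL-Probability.Probability"
begin

text \<open>Primitive randomness on a
probability space M: inter-arrival gaps gap k (the arrival process is Poisson),
randomisation variables U k (customer k is admitted iff U k \<le> x at its arrival),
and potential usage durations S k (used only if customer k is admitted).\<close>

definition arrival :: "(nat \<Rightarrow> 'a \<Rightarrow> real) \<Rightarrow> nat \<Rightarrow> 'a \<Rightarrow> real" where
  "arrival gap k \<omega> = (\<Sum>i\<le>k. gap i \<omega>)"

definition observables ::
  "(nat \<Rightarrow> 'a \<Rightarrow> real) \<Rightarrow> (nat \<Rightarrow> 'a \<Rightarrow> real) \<Rightarrow> (nat \<Rightarrow> 'a \<Rightarrow> real) \<Rightarrow> real \<Rightarrow> ('a \<Rightarrow> real) set" where
  "observables gap U S s = (\<Union>k.
     {(\<lambda>\<omega>. if arrival gap k \<omega> \<le> s then 1 else 0),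
      (\<lambda>\<omega>. if arrival gap k \<omega> \<le> s then arrival gap k \<omega> else 0),
      (\<lambda>\<omega>. if arrival gap k \<omega> \<le> s then U k \<omega> else 0),
      (\<lambda>\<omega>. if arrival gap k \<omega> \<le> s then min (S k \<omega>) (s - arrival gap k \<omega>) else 0)})"

definition history ::
  "'a measure \<Rightarrow> (nat \<Rightarrow> 'a \<Rightarrow> real) \<Rightarrow> (nat \<Rightarrow> 'a \<Rightarrow> real) \<Rightarrow> (nat \<Rightarrow> 'a \<Rightarrow> real) \<Rightarrow> real \<Rightarrow> 'a measure" where
  "history M gap U S s = sigma (space M)
     {f -` B \<inter> space M | f B. f \<in> observables gap U S s \<and> B \<in> sets borel}"

definition predictable ::
  "'a measure \<Rightarrow> (real \<Rightarrow> 'a measure) \<Rightarrow> (real \<times> 'a) measure" where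
  "predictable M F = sigma ({0..} \<times> space M)
     ({{s<..t} \<times> A | s t A. 0 \<le> s \<and> s \<le> t \<and> A \<in> sets (F s)} \<union>
      {{0} \<times> A | A. A \<in> sets (F 0)})"

definition admitted ::
  "(nat \<Rightarrow> 'a \<Rightarrow> real) \<Rightarrow> (nat \<Rightarrow> 'a \<Rightarrow> real) \<Rightarrow> (real \<Rightarrow> 'a \<Rightarrow> real) \<Rightarrow> nat \<Rightarrow> 'a \<Rightarrow> bool" where
  "admitted gap U x k \<omega> \<longleftrightarrow> U k \<omega> \<le> x (arrival gap k \<omega>) \<omega>"

definition busy ::
  "(nat \<Rightarrow> 'a \<Rightarrow> real) \<Rightarrow> (nat \<Rightarrow> 'a \<Rightarrow> real) \<Rightarrow> (nat \<Rightarrow> 'a \<Rightarrow> real) \<Rightarrow> (real \<Rightarrow> 'a \<Rightarrow> real) \<Rightarrow> real \<Rightarrow> 'a \<Rightarrow> nat" where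
  "busy gap U S x t \<omega> = card {k. admitted gap U x k \<omega> \<and> arrival gap k \<omega> < t \<and> t < arrival gap k \<omega> + S k \<omega>}"

definition feasible_policy ::
  "'a measure \<Rightarrow> nat \<Rightarrow> (nat \<Rightarrow> 'a \<Rightarrow> real) \<Rightarrow> (nat \<Rightarrow> 'a \<Rightarrow> real) \<Rightarrow> (nat \<Rightarrow> 'a \<Rightarrow> real) \<Rightarrow> (real \<Rightarrow> 'a \<Rightarrow> real) \<Rightarrow> bool" where
  "feasible_policy M c gap U S x \<longleftrightarrow>
     (\<lambda>(t, \<omega>). x t \<omega>) \<in> borel_measurable (predictable M (history M gap U S)) \<and>
     (\<forall>t\<ge>0. \<forall>\<omega>\<in>space M. 0 \<le> x t \<omega> \<and> x t \<omega> \<le> 1) \<and>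
     (AE \<omega> in M. \<forall>t\<ge>0. c \<le> busy gap U S x t \<omega> \<longrightarrow> x t \<omega> = 0)"

definition FLU :: "real \<Rightarrow> real \<Rightarrow> nat \<Rightarrow> (real \<Rightarrow> real) \<Rightarrow> real" where
  "FLU lam d c g = Sup ((\<lambda>y. lam * g y) ` {y \<in> {0..1}. lam * y * d \<le> real c})"

end

theory Submission
  imports Defs
begin


locale adm =
  fixes M :: "'a measure" and lam :: real and gap U S :: "nat \<Rightarrow> 'a \<Rightarrow> real"
  assumes M: "prob_space M"
    and lam: "lam > 0"
    and gap_exp: "\<And>k. distributed M lborel (gap k) (exponential_density lam)"
    and U_meas: "\<And>k. U k \<in> borel_measurable M"
    and S_meas: "\<And>k. S k \<in> borel_measurable M"
    and indep: "prob_space.indep_vars M (\<lambda>_. borel)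
                  (\<lambda>i. case i of Inl k \<Rightarrow> gap k | Inr (Inl k) \<Rightarrow> U k | Inr (Inr k) \<Rightarrow> S k) UNIV"
begin

sublocale prob_space M by (rule M)

definition XX :: "nat + nat + nat \<Rightarrow> 'a \<Rightarrow> real" where
  "XX = (\<lambda>i. case i of Inl k \<Rightarrow> gap k | Inr (Inl k) \<Rightarrow> U k | Inr (Inr k) \<Rightarrow> S k)"

definition JJ :: "nat \<Rightarrow> (nat + nat + nat) set" where
  "JJ k = {Inl i|i. i<k} \<union> {Inr (Inl i)|i. i<k} \<union> {Inr (Inr i)|i. i<k}"

definition Z :: "nat \<Rightarrow> 'a \<Rightarrow> (nat + nat + nat \<Rightarrow> real)" where
  "Z k \<omega> = restrict (\<lambda>i. XX i \<omega>) (JJ k)"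

abbreviation PZ :: "nat \<Rightarrow> (nat + nat + nat \<Rightarrow> real) measure" where
  "PZ k \<equiv> PiM (JJ k) (\<lambda>_. borel)"

definition ap :: "nat \<Rightarrow> 'a \<Rightarrow> real" where
  "ap k \<omega> = (\<Sum>i<k. gap i \<omega>)"

abbreviation a :: "nat \<Rightarrow> 'a \<Rightarrow> real" where
  "a \<equiv> arrival gap"

definition Om0 :: "'a set" where
  "Om0 = {\<omega>\<in>space M. \<forall>i. 0 < gap i \<omega>}"

lemma gap_meas[measurable]: "gap k \<in> borel_measurable M"
  using distributed_measurable[OF gap_exp[of k]] by simp

lemma XX_meas[measurable]: "XX i \<in> borel_measurable M"
  by (cases i rule: sum.exhaust) (auto simp: XX_def U_meas S_meas split: sum.split)

lemma a_eq: "a k \<omega> = ap k \<omega> + gap k \<omega>"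
  by (simp add: arrival_def ap_def lessThan_Suc_atMost[symmetric])

lemma a_meas[measurable]: "a k \<in> borel_measurable M"
  unfolding arrival_def by measurable

lemma ap_meas[measurable]: "ap k \<in> borel_measurable M"
  unfolding ap_def by measurable

lemma Om0_sub: "Om0 \<subseteq> space M" by (auto simp: Om0_def)

lemma Om0_sets[measurable]: "Om0 \<in> sets M"
proof -
  have "Om0 = (\<Inter>i. {\<omega>\<in>space M. 0 < gap i \<omega>})" by (auto simp: Om0_def)
  also have "\<dots> \<in> sets M" by measurable
  finally show ?thesis .
qed

lemma gap_pos_AE: "AE \<omega> in M. 0 < gap i \<omega>"
proof -
  have "\<P>(\<omega> in M. 0 < gap i \<omega>) = exp (- 0 * lam)"
    by (rule exponential_distributedD_gt[OF gap_exp]) (use lam in auto)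
  then have "prob {\<omega>\<in>space M. 0 < gap i \<omega>} = 1" by simp
  then have "AE \<omega> in M. \<omega> \<in> {\<omega>\<in>space M. 0 < gap i \<omega>}" by (rule AE_prob_1)
  then show ?thesis by auto
qed

lemma AE_Om0: "AE \<omega> in M. \<omega> \<in> Om0"
proof -
  have "AE \<omega> in M. \<forall>i. 0 < gap i \<omega>" using gap_pos_AE by (simp add: AE_all_countable)
  then show ?thesis by (auto simp: Om0_def)
qed

lemma ap_nonneg: "\<omega> \<in> Om0 \<Longrightarrow> 0 \<le> ap k \<omega>"
  unfolding ap_def Om0_def by (auto intro!: sum_nonneg simp: less_imp_le)

lemma a_mono: "\<omega> \<in> Om0 \<Longrightarrow> k \<le> j \<Longrightarrow> a k \<omega> \<le> a j \<omega>"
  unfolding arrival_def Om0_def by (intro sum_mono2) (auto simp: less_imp_le)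

lemma a_strict: "\<omega> \<in> Om0 \<Longrightarrow> k < j \<Longrightarrow> a k \<omega> < a j \<omega>"
proof -
  assume w: "\<omega> \<in> Om0" and kj: "k < j"
  have "a k \<omega> \<le> ap j \<omega>" unfolding arrival_def ap_def
    using w kj by (intro sum_mono2) (auto simp: Om0_def less_imp_le)
  also have "\<dots> < a j \<omega>" using w by (simp add: a_eq Om0_def)
  finally show ?thesis .
qed

end



context adm begin

lemma Z_meas[measurable]: "Z k \<in> measurable M (PZ k)"
  unfolding Z_def by (rule measurable_restrict) simp

lemma comp_meas: "i \<in> JJ k \<Longrightarrow> (\<lambda>z. z i) \<in> borel_measurable (PZ k)"
  by (rule measurable_component_singleton)

definition asum :: "nat \<Rightarrow> (nat + nat + nat \<Rightarrow> real) \<Rightarrow> real" where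
  "asum j z = (\<Sum>i\<le>j. z (Inl i))"

lemma asum_meas[measurable]: "j < k \<Longrightarrow> asum j \<in> borel_measurable (PZ k)"
  unfolding asum_def by (intro borel_measurable_sum comp_meas) (auto simp: JJ_def)

lemma asum_Z: "j < k \<Longrightarrow> asum j (Z k \<omega>) = a j \<omega>"
  by (simp add: asum_def Z_def JJ_def XX_def arrival_def)

lemma Z_U: "j < k \<Longrightarrow> Z k \<omega> (Inr (Inl j)) = U j \<omega>"
  by (simp add: Z_def JJ_def XX_def)

lemma Z_S: "j < k \<Longrightarrow> Z k \<omega> (Inr (Inr j)) = S j \<omega>"
  by (simp add: Z_def JJ_def XX_def)

lemma rep_obs:
  assumes f: "f \<in> observables gap U S s"
  shows "\<exists>\<psi>\<in>borel_measurable (PZ k). \<forall>\<omega>\<in>Om0. s < a k \<omega> \<longrightarrow> f \<omega> = \<psi> (Z k \<omega>)"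
proof -
  from f obtain j where fj:
    "f = (\<lambda>\<omega>. if a j \<omega> \<le> s then 1 else 0) \<or>
     f = (\<lambda>\<omega>. if a j \<omega> \<le> s then a j \<omega> else 0) \<or>
     f = (\<lambda>\<omega>. if a j \<omega> \<le> s then U j \<omega> else 0) \<or>
     f = (\<lambda>\<omega>. if a j \<omega> \<le> s then min (S j \<omega>) (s - a j \<omega>) else 0)"
    unfolding observables_def by blast
  show ?thesis
  proof (cases "j < k")
    case False
    have "\<forall>\<omega>\<in>Om0. s < a k \<omega> \<longrightarrow> f \<omega> = 0"
    proof (intro ballI impI)
      fix \<omega> assume "\<omega> \<in> Om0" "s < a k \<omega>"
      then have "s < a j \<omega>" using a_mono[of \<omega> k j] False by auto
      then show "f \<omega> = 0" using fj by auto
    qed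
    then show ?thesis by (intro bexI[of _ "\<lambda>_. 0"]) auto
  next
    case True
    note [measurable] = asum_meas[OF True] comp_meas[of "Inr (Inl j)" k] comp_meas[of "Inr (Inr j)" k]
    have J: "Inr (Inl j) \<in> JJ k" "Inr (Inr j) \<in> JJ k" using True by (auto simp: JJ_def)
    from fj show ?thesis
    proof (elim disjE)
      assume f: "f = (\<lambda>\<omega>. if a j \<omega> \<le> s then 1 else 0)"
      show ?thesis
        by (rule bexI[of _ "\<lambda>z. if asum j z \<le> s then 1 else 0"]) (auto simp: f asum_Z[OF True])
    next
      assume f: "f = (\<lambda>\<omega>. if a j \<omega> \<le> s then a j \<omega> else 0)"
      show ?thesis
        by (rule bexI[of _ "\<lambda>z. if asum j z \<le> s then asum j z else 0"]) (auto simp: f asum_Z[OF True])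
    next
      assume f: "f = (\<lambda>\<omega>. if a j \<omega> \<le> s then U j \<omega> else 0)"
      show ?thesis
        by (rule bexI[of _ "\<lambda>z. if asum j z \<le> s then z (Inr (Inl j)) else 0"])
           (use J in \<open>auto simp: f asum_Z[OF True] Z_U[OF True]\<close>)
    next
      assume f: "f = (\<lambda>\<omega>. if a j \<omega> \<le> s then min (S j \<omega>) (s - a j \<omega>) else 0)"
      show ?thesis
        by (rule bexI[of _ "\<lambda>z. if asum j z \<le> s then min (z (Inr (Inr j))) (s - asum j z) else 0"])
           (use J in \<open>auto simp: f asum_Z[OF True] Z_S[OF True]\<close>)
    qed
  qed
qed

lemma sets_history:
  "sets (history M gap U S s) = sigma_sets (space M)
     {f -` B \<inter> space M | f B. f \<in> observables gap U S s \<and> B \<in> sets borel}"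
  unfolding history_def by (rule sets_measure_of) auto

lemma space_history: "space (history M gap U S s) = space M"
  unfolding history_def by (rule space_measure_of) auto

lemma repF:
  assumes "A \<in> sets (history M gap U S s)"
  shows "\<exists>A'\<in>sets (PZ k). \<forall>\<omega>\<in>Om0. s < a k \<omega> \<longrightarrow> (\<omega> \<in> A \<longleftrightarrow> Z k \<omega> \<in> A')"
  using assms unfolding sets_history
proof (induction rule: sigma_sets.induct)
  case (Basic A)
  then obtain f B where A: "A = f -` B \<inter> space M" and f: "f \<in> observables gap U S s" and B: "B \<in> sets borel"
    by blast
  from rep_obs[OF f, of k] obtain \<psi> where \<psi>: "\<psi> \<in> borel_measurable (PZ k)"
    "\<forall>\<omega>\<in>Om0. s < a k \<omega> \<longrightarrow> f \<omega> = \<psi> (Z k \<omega>)" by blast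
  show ?case
  proof (intro bexI[of _ "\<psi> -` B \<inter> space (PZ k)"] ballI impI)
    fix \<omega> assume "\<omega> \<in> Om0" "s < a k \<omega>"
    moreover have "Z k \<omega> \<in> space (PZ k)" using \<open>\<omega> \<in> Om0\<close> Om0_sub measurable_space[OF Z_meas] by blast
    ultimately show "(\<omega> \<in> A) = (Z k \<omega> \<in> \<psi> -` B \<inter> space (PZ k))"
      using \<psi> Om0_sub by (auto simp: A)
  qed (use \<psi> B in measurable)
next
  case Empty
  then show ?case by (intro bexI[of _ "{}"]) auto
next
  case (Compl A)
  then obtain A' where A': "A' \<in> sets (PZ k)" "\<forall>\<omega>\<in>Om0. s < a k \<omega> \<longrightarrow> (\<omega> \<in> A \<longleftrightarrow> Z k \<omega> \<in> A')" by blast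
  show ?case
  proof (intro bexI[of _ "space (PZ k) - A'"] ballI impI)
    fix \<omega> assume "\<omega> \<in> Om0" "s < a k \<omega>"
    moreover have "Z k \<omega> \<in> space (PZ k)" using \<open>\<omega> \<in> Om0\<close> Om0_sub measurable_space[OF Z_meas] by blast
    ultimately show "(\<omega> \<in> space M - A) = (Z k \<omega> \<in> space (PZ k) - A')"
      using A' Om0_sub by auto
  qed (use A' in auto)
next
  case (Union A)
  then have "\<forall>i. \<exists>A'\<in>sets (PZ k). \<forall>\<omega>\<in>Om0. s < a k \<omega> \<longrightarrow> (\<omega> \<in> A i \<longleftrightarrow> Z k \<omega> \<in> A')" by blast
  then obtain A' where A': "\<And>i. A' i \<in> sets (PZ k)" "\<And>i. \<forall>\<omega>\<in>Om0. s < a k \<omega> \<longrightarrow> (\<omega> \<in> A i \<longleftrightarrow> Z k \<omega> \<in> A' i)"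
    by metis
  show ?case
    by (intro bexI[of _ "\<Union>i. A' i"]) (use A' in auto)
qed

abbreviation PR where "PR \<equiv> predictable M (history M gap U S)"

lemma PR_gens_sub:
  "{{s<..t} \<times> A | s t A. 0 \<le> s \<and> s \<le> t \<and> A \<in> sets (history M gap U S s)} \<union>
      {{0} \<times> A | A. A \<in> sets (history M gap U S 0)} \<subseteq> Pow ({0..} \<times> space M)"
  using sets.sets_into_space[where M="history M gap U S _", unfolded space_history] by fastforce

lemma sets_PR: "sets PR = sigma_sets ({0..} \<times> space M)
     ({{s<..t} \<times> A | s t A. 0 \<le> s \<and> s \<le> t \<and> A \<in> sets (history M gap U S s)} \<union>
      {{0} \<times> A | A. A \<in> sets (history M gap U S 0)})"
  unfolding predictable_def by (rule sets_measure_of[OF PR_gens_sub])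

lemma space_PR: "space PR = {0..} \<times> space M"
  unfolding predictable_def by (rule space_measure_of[OF PR_gens_sub])

lemma Z_space: "\<omega> \<in> Om0 \<Longrightarrow> Z k \<omega> \<in> space (PZ k)"
  using Om0_sub measurable_space[OF Z_meas] by blast

lemma repP:
  assumes "E \<in> sets PR"
  shows "\<exists>E'\<in>sets (borel \<Otimes>\<^sub>M PZ k). \<forall>\<omega>\<in>Om0. \<forall>t. ap k \<omega> < t \<and> t \<le> a k \<omega> \<longrightarrow>
            ((t, \<omega>) \<in> E \<longleftrightarrow> (t, Z k \<omega>) \<in> E')"
  using assms unfolding sets_PR
proof (induction rule: sigma_sets.induct)
  case (Basic E)
  then show ?case
  proof (elim UnE CollectE exE conjE)
    fix s t A assume E: "E = {s<..t} \<times> A" and st: "0 \<le> s" "s \<le> t" and A: "A \<in> sets (history M gap U S s)"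
    from repF[OF A, of k] obtain A' where A': "A' \<in> sets (PZ k)"
      "\<forall>\<omega>\<in>Om0. s < a k \<omega> \<longrightarrow> (\<omega> \<in> A \<longleftrightarrow> Z k \<omega> \<in> A')" by blast
    show ?thesis
    proof (intro bexI[of _ "{s<..t} \<times> A'"] ballI allI impI)
      fix \<omega> t' assume "\<omega> \<in> Om0" "ap k \<omega> < t' \<and> t' \<le> a k \<omega>"
      then show "((t', \<omega>) \<in> E) = ((t', Z k \<omega>) \<in> {s<..t} \<times> A')"
        using A' by (auto simp: E)
    qed (use A' in auto)
  next
    fix A assume E: "E = {0} \<times> A"
    show ?thesis
    proof (intro bexI[of _ "{}"] ballI allI impI)
      fix \<omega> t' assume "\<omega> \<in> Om0" "ap k \<omega> < t' \<and> t' \<le> a k \<omega>"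
      then show "((t', \<omega>) \<in> E) = ((t', Z k \<omega>) \<in> {})"
        using ap_nonneg[of \<omega> k] by (auto simp: E)
    qed auto
  qed
next
  case Empty
  then show ?case by (intro bexI[of _ "{}"]) auto
next
  case (Compl E)
  then obtain E' where E': "E' \<in> sets (borel \<Otimes>\<^sub>M PZ k)" "\<forall>\<omega>\<in>Om0. \<forall>t. ap k \<omega> < t \<and> t \<le> a k \<omega> \<longrightarrow>
            ((t, \<omega>) \<in> E \<longleftrightarrow> (t, Z k \<omega>) \<in> E')" by blast
  show ?case
  proof (intro bexI[of _ "space (borel \<Otimes>\<^sub>M PZ k) - E'"] ballI allI impI)
    fix \<omega> t assume w: "\<omega> \<in> Om0" and t: "ap k \<omega> < t \<and> t \<le> a k \<omega>"
    have "0 \<le> t" using t ap_nonneg[OF w, of k] by auto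
    then show "((t, \<omega>) \<in> {0..} \<times> space M - E) = ((t, Z k \<omega>) \<in> space (borel \<Otimes>\<^sub>M PZ k) - E')"
      using E' w t Z_space[OF w, of k] Om0_sub by (auto simp: space_pair_measure)
  qed (use E' in auto)
next
  case (Union A)
  then have "\<forall>i. \<exists>E'\<in>sets (borel \<Otimes>\<^sub>M PZ k). \<forall>\<omega>\<in>Om0. \<forall>t. ap k \<omega> < t \<and> t \<le> a k \<omega> \<longrightarrow>
            ((t, \<omega>) \<in> A i \<longleftrightarrow> (t, Z k \<omega>) \<in> E')" by blast
  then obtain E' where E': "\<And>i. E' i \<in> sets (borel \<Otimes>\<^sub>M PZ k)" "\<And>i. \<forall>\<omega>\<in>Om0. \<forall>t. ap k \<omega> < t \<and> t \<le> a k \<omega> \<longrightarrow>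
            ((t, \<omega>) \<in> A i \<longleftrightarrow> (t, Z k \<omega>) \<in> E' i)"
    by metis
  show ?case
    by (intro bexI[of _ "\<Union>i. E' i"]) (use E' in auto)
qed

lemma repfun:
  fixes Y :: "real \<times> 'a \<Rightarrow> ennreal"
  assumes "Y \<in> borel_measurable PR"
  shows "\<exists>h\<in>borel_measurable (borel \<Otimes>\<^sub>M PZ k). \<forall>\<omega>\<in>Om0. \<forall>t. ap k \<omega> < t \<and> t \<le> a k \<omega> \<longrightarrow>
            Y (t, \<omega>) = h (t, Z k \<omega>)"
  using assms
proof (induction rule: borel_measurable_induct)
  case (cong f g)
  then obtain h where h: "h\<in>borel_measurable (borel \<Otimes>\<^sub>M PZ k)" "\<forall>\<omega>\<in>Om0. \<forall>t. ap k \<omega> < t \<and> t \<le> a k \<omega> \<longrightarrow>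
            g (t, \<omega>) = h (t, Z k \<omega>)" by blast
  show ?case
  proof (intro bexI[OF _ h(1)] ballI allI impI)
    fix \<omega> t assume w: "\<omega> \<in> Om0" and t: "ap k \<omega> < t \<and> t \<le> a k \<omega>"
    have "0 \<le> t" using t ap_nonneg[OF w, of k] by auto
    then have "(t, \<omega>) \<in> space PR" using w Om0_sub by (auto simp: space_PR)
    then show "f (t, \<omega>) = h (t, Z k \<omega>)" using cong(3) h(2) w t by auto
  qed
next
  case (set A)
  from repP[OF set] obtain E' where E': "E'\<in>sets (borel \<Otimes>\<^sub>M PZ k)" "\<forall>\<omega>\<in>Om0. \<forall>t. ap k \<omega> < t \<and> t \<le> a k \<omega> \<longrightarrow>
            ((t, \<omega>) \<in> A \<longleftrightarrow> (t, Z k \<omega>) \<in> E')" by blast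
  show ?case
    by (rule bexI[of _ "indicator E'"]) (use E' in \<open>auto simp: indicator_def\<close>)
next
  case (mult u c)
  then obtain h where h: "h\<in>borel_measurable (borel \<Otimes>\<^sub>M PZ k)" "\<forall>\<omega>\<in>Om0. \<forall>t. ap k \<omega> < t \<and> t \<le> a k \<omega> \<longrightarrow>
            u (t, \<omega>) = h (t, Z k \<omega>)" by blast
  show ?case
    by (rule bexI[of _ "\<lambda>p. c * h p"]) (use h in auto)
next
  case (add u v)
  then obtain h h' where h: "h\<in>borel_measurable (borel \<Otimes>\<^sub>M PZ k)" "\<forall>\<omega>\<in>Om0. \<forall>t. ap k \<omega> < t \<and> t \<le> a k \<omega> \<longrightarrow>
            u (t, \<omega>) = h (t, Z k \<omega>)"
    and h': "h'\<in>borel_measurable (borel \<Otimes>\<^sub>M PZ k)" "\<forall>\<omega>\<in>Om0. \<forall>t. ap k \<omega> < t \<and> t \<le> a k \<omega> \<longrightarrow>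
            v (t, \<omega>) = h' (t, Z k \<omega>)" by blast
  show ?case
    by (rule bexI[of _ "\<lambda>p. h' p + h p"]) (use h h' in auto)
next
  case (seq W)
  then have "\<forall>i. \<exists>h\<in>borel_measurable (borel \<Otimes>\<^sub>M PZ k). \<forall>\<omega>\<in>Om0. \<forall>t. ap k \<omega> < t \<and> t \<le> a k \<omega> \<longrightarrow>
            W i (t, \<omega>) = h (t, Z k \<omega>)" by blast
  then obtain h where h: "\<And>i. h i \<in> borel_measurable (borel \<Otimes>\<^sub>M PZ k)" "\<And>i. \<forall>\<omega>\<in>Om0. \<forall>t. ap k \<omega> < t \<and> t \<le> a k \<omega> \<longrightarrow>
            W i (t, \<omega>) = h i (t, Z k \<omega>)" by metis
  show ?case
  proof (rule bexI[of _ "\<lambda>p. SUP i. h i p"], intro ballI allI impI)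
    fix \<omega> t assume "\<omega> \<in> Om0" "ap k \<omega> < t \<and> t \<le> a k \<omega>"
    then have "\<And>i. W i (t, \<omega>) = h i (t, Z k \<omega>)" using h(2) by blast
    then show "(SUP i. W i) (t, \<omega>) = (SUP i. h i (t, Z k \<omega>))"
      by (simp add: image_comp)
  qed (use h in auto)
qed

end



context adm begin

lemma indep_XX: "indep_vars (\<lambda>_. borel) XX UNIV"
  using indep unfolding XX_def .

lemma indep_single:
  assumes "j \<notin> A"
  shows "indep_var (PiM A (\<lambda>_. borel)) (\<lambda>\<omega>. restrict (\<lambda>i. XX i \<omega>) A)
          (PiM {j} (\<lambda>_. borel)) (\<lambda>\<omega>. restrict (\<lambda>i. XX i \<omega>) {j})"
    using assms by (intro indep_var_restrict[OF indep_XX]) auto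

lemma indep_nn:
  assumes ind: "indep_var N V N' Y" and F[measurable]: "F \<in> borel_measurable (N \<Otimes>\<^sub>M N')"
  shows "(\<integral>\<^sup>+\<omega>. F (V \<omega>, Y \<omega>) \<partial>M) = (\<integral>\<^sup>+\<omega>. (\<integral>\<^sup>+y. F (V \<omega>, y) \<partial>distr M N' Y) \<partial>M)"
proof -
  from ind[unfolded indep_var_distribution_eq] have
    V[measurable]: "V \<in> measurable M N" and Y[measurable]: "Y \<in> measurable M N'" and
    eq: "distr M N V \<Otimes>\<^sub>M distr M N' Y = distr M (N \<Otimes>\<^sub>M N') (\<lambda>x. (V x, Y x))" by auto
  interpret PY: prob_space "distr M N' Y" by (rule prob_space_distr) simp
  interpret PV: prob_space "distr M N V" by (rule prob_space_distr) simp
  interpret pair_sigma_finite "distr M N V" "distr M N' Y" ..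
  have "(\<integral>\<^sup>+\<omega>. F (V \<omega>, Y \<omega>) \<partial>M) = integral\<^sup>N (distr M (N \<Otimes>\<^sub>M N') (\<lambda>x. (V x, Y x))) F"
    by (subst nn_integral_distr) auto
  also have "\<dots> = integral\<^sup>N (distr M N V \<Otimes>\<^sub>M distr M N' Y) F" by (simp add: eq)
  also have "\<dots> = (\<integral>\<^sup>+v. \<integral>\<^sup>+y. F (v, y) \<partial>distr M N' Y \<partial>distr M N V)"
    by (subst PY.nn_integral_fst[symmetric]) (auto)
  also have "\<dots> = (\<integral>\<^sup>+\<omega>. (\<integral>\<^sup>+y. F (V \<omega>, y) \<partial>distr M N' Y) \<partial>M)"
    by (subst nn_integral_distr) (auto intro!: PY.borel_measurable_nn_integral_fst)
  finally show ?thesis .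
qed

lemma indep_nn_single:
  assumes j: "j \<notin> A" and F[measurable]: "F \<in> borel_measurable (PiM A (\<lambda>_. borel) \<Otimes>\<^sub>M borel)"
  shows "(\<integral>\<^sup>+\<omega>. F (restrict (\<lambda>i. XX i \<omega>) A, XX j \<omega>) \<partial>M) =
         (\<integral>\<^sup>+\<omega>. (\<integral>\<^sup>+y. F (restrict (\<lambda>i. XX i \<omega>) A, y) \<partial>distr M borel (XX j)) \<partial>M)"
proof -
  have cj[measurable]: "(\<lambda>f. f j) \<in> borel_measurable (PiM {j} (\<lambda>_. borel))"
    by (rule measurable_component_singleton) simp
  let ?G = "\<lambda>(v, y::nat+nat+nat \<Rightarrow> real). F (v, y j)"
  have G: "?G \<in> borel_measurable (PiM A (\<lambda>_. borel) \<Otimes>\<^sub>M PiM {j} (\<lambda>_. borel))" by measurable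
  have "(\<integral>\<^sup>+\<omega>. F (restrict (\<lambda>i. XX i \<omega>) A, XX j \<omega>) \<partial>M) =
        (\<integral>\<^sup>+\<omega>. ?G (restrict (\<lambda>i. XX i \<omega>) A, restrict (\<lambda>i. XX i \<omega>) {j}) \<partial>M)" by simp
  also have "\<dots> = (\<integral>\<^sup>+\<omega>. (\<integral>\<^sup>+y. ?G (restrict (\<lambda>i. XX i \<omega>) A, y)
       \<partial>distr M (PiM {j} (\<lambda>_. borel)) (\<lambda>\<omega>. restrict (\<lambda>i. XX i \<omega>) {j})) \<partial>M)"
    by (rule indep_nn[OF indep_single[OF j] G])
  also have "\<dots> = (\<integral>\<^sup>+\<omega>. (\<integral>\<^sup>+y. F (restrict (\<lambda>i. XX i \<omega>) A, y) \<partial>distr M borel (XX j)) \<partial>M)"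
  proof (rule nn_integral_cong)
    fix \<omega> assume w: "\<omega> \<in> space M"
    have m1: "(\<lambda>y. F (restrict (\<lambda>i. XX i \<omega>) A, y)) \<in> borel_measurable borel"
      using w by measurable
    have "(\<integral>\<^sup>+y. ?G (restrict (\<lambda>i. XX i \<omega>) A, y)
       \<partial>distr M (PiM {j} (\<lambda>_. borel)) (\<lambda>\<omega>. restrict (\<lambda>i. XX i \<omega>) {j})) =
       (\<integral>\<^sup>+\<omega>'. F (restrict (\<lambda>i. XX i \<omega>) A, XX j \<omega>') \<partial>M)"
      using w by (subst nn_integral_distr) auto
    also have "\<dots> = (\<integral>\<^sup>+y. F (restrict (\<lambda>i. XX i \<omega>) A, y) \<partial>distr M borel (XX j))"
      using m1 by (subst nn_integral_distr) auto
    finally show "(\<integral>\<^sup>+y. ?G (restrict (\<lambda>i. XX i \<omega>) A, y)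
       \<partial>distr M (PiM {j} (\<lambda>_. borel)) (\<lambda>\<omega>. restrict (\<lambda>i. XX i \<omega>) {j})) =
       (\<integral>\<^sup>+y. F (restrict (\<lambda>i. XX i \<omega>) A, y) \<partial>distr M borel (XX j))" .
  qed
  finally show ?thesis .
qed

end



context adm begin

lemma meas_ll: "f \<in> borel_measurable (borel \<Otimes>\<^sub>M (borel::real measure)) \<Longrightarrow> f \<in> borel_measurable (lborel \<Otimes>\<^sub>M (lborel::real measure))"
proof -
  assume f: "f \<in> borel_measurable (borel \<Otimes>\<^sub>M (borel::real measure))"
  have "borel_measurable (lborel \<Otimes>\<^sub>M lborel) = borel_measurable (borel \<Otimes>\<^sub>M (borel::real measure))"
    by (rule measurable_cong_sets) (auto intro: sets_pair_measure_cong)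
  then show ?thesis using f by simp
qed

abbreviation ED where "ED \<equiv> density lborel (\<lambda>x. ennreal (exponential_density lam x))"

lemma distr_gap: "distr M borel (gap k) = ED"
proof -
  have "distr M borel (gap k) = distr M lborel (gap k)" by (rule distr_cong) auto
  also have "\<dots> = ED" using distributed_distr_eq_density[OF gap_exp[of k]] .
  finally show ?thesis .
qed

lemma expo_tail:
  assumes u: "0 \<le> u"
  shows "(\<integral>\<^sup>+g. indicator {u<..} g \<partial>ED) = ennreal (exp (- u * lam))"
proof -
  have "(\<integral>\<^sup>+g. indicator {u<..} g \<partial>ED) = emeasure ED {u<..}"
    by (rule nn_integral_indicator) simp
  also have "\<dots> = emeasure (distr M borel (gap 0)) {u<..}" by (simp add: distr_gap)
  also have "\<dots> = emeasure M {\<omega>\<in>space M. u < gap 0 \<omega>}"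
    by (subst emeasure_distr) (auto intro!: arg_cong2[where f=emeasure])
  also have "\<dots> = ennreal (prob {\<omega>\<in>space M. u < gap 0 \<omega>})"
    by (simp add: emeasure_eq_measure)
  also have "\<dots> = ennreal (exp (- u * lam))"
    using exponential_distributedD_gt[OF gap_exp u lam] by simp
  finally show ?thesis .
qed

lemma expo_lemma:
  fixes h :: "real \<Rightarrow> ennreal"
  assumes h[measurable]: "h \<in> borel_measurable borel"
  shows "(\<integral>\<^sup>+g. h (A + g) \<partial>ED) =
         lam * (\<integral>\<^sup>+g. (\<integral>\<^sup>+t. indicator {A<..<A+g} t * h t \<partial>lborel) \<partial>ED)"
proof -
  let ?e = "\<lambda>x. ennreal (exponential_density lam x)"
  have e_meas[measurable]: "?e \<in> borel_measurable borel"
    unfolding exponential_density_def by measurable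
  have mI[measurable]: "(\<lambda>g. \<integral>\<^sup>+ t. indicator {A<..<A+g} t * h t \<partial>lborel) \<in> borel_measurable borel"
  proof (rule lborel.borel_measurable_nn_integral)
    have "(\<lambda>p::real\<times>real. (if A < snd p \<and> snd p < A + fst p then h (snd p) else 0)) \<in> borel_measurable (borel \<Otimes>\<^sub>M borel)"
      by measurable
    then have "(\<lambda>p::real\<times>real. (if A < snd p \<and> snd p < A + fst p then h (snd p) else 0)) \<in> borel_measurable (borel \<Otimes>\<^sub>M lborel)"
    proof -
      have "borel_measurable (borel \<Otimes>\<^sub>M lborel) = borel_measurable (borel \<Otimes>\<^sub>M (borel::real measure))"
        by (rule measurable_cong_sets) (auto intro: sets_pair_measure_cong)
      then show ?thesis using \<open>_ \<in> borel_measurable (borel \<Otimes>\<^sub>M borel)\<close> by simp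
    qed
    then show "(\<lambda>(g, t). indicator {A<..<A+g} t * h t) \<in> borel_measurable (borel \<Otimes>\<^sub>M lborel)"
      by (rule measurable_cong[THEN iffD1, rotated]) (auto simp: indicator_def)
  qed
  have "(\<integral>\<^sup>+g. (\<integral>\<^sup>+t. indicator {A<..<A+g} t * h t \<partial>lborel) \<partial>ED) =
        (\<integral>\<^sup>+g. ?e g * (\<integral>\<^sup>+t. indicator {A<..<A+g} t * h t \<partial>lborel) \<partial>lborel)"
    by (subst nn_integral_density) auto
  also have "\<dots> = (\<integral>\<^sup>+g. (\<integral>\<^sup>+t. ?e g * (indicator {A<..<A+g} t * h t) \<partial>lborel) \<partial>lborel)"
    by (subst nn_integral_cmult) auto
  also have "\<dots> = (\<integral>\<^sup>+t. (\<integral>\<^sup>+g. ?e g * (indicator {A<..<A+g} t * h t) \<partial>lborel) \<partial>lborel)"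
  proof (rule lborel_pair.Fubini'[symmetric], rule meas_ll)
    have "(\<lambda>p::real\<times>real. ?e (fst p) * (if A < snd p \<and> snd p < A + fst p then h (snd p) else 0)) \<in> borel_measurable (borel \<Otimes>\<^sub>M borel)"
      by measurable
    then show "(\<lambda>(g, t). ?e g * (indicator {A<..<A+g} t * h t)) \<in> borel_measurable (borel \<Otimes>\<^sub>M borel)"
      by (rule measurable_cong[THEN iffD1, rotated]) (auto simp: indicator_def)
  qed
  also have "\<dots> = (\<integral>\<^sup>+t. (h t * indicator {A<..} t) * (\<integral>\<^sup>+g. ?e g * indicator {t - A<..} g \<partial>lborel) \<partial>lborel)"
  proof (rule nn_integral_cong)
    fix t :: real
    have "(\<integral>\<^sup>+g. ?e g * (indicator {A<..<A+g} t * h t) \<partial>lborel) =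
          (\<integral>\<^sup>+g. (h t * indicator {A<..} t) * (?e g * indicator {t - A<..} g) \<partial>lborel)"
      by (rule nn_integral_cong) (auto simp: indicator_def mult_ac)
    also have "\<dots> = (h t * indicator {A<..} t) * (\<integral>\<^sup>+g. ?e g * indicator {t - A<..} g \<partial>lborel)"
      by (rule nn_integral_cmult) simp
    finally show "(\<integral>\<^sup>+g. ?e g * (indicator {A<..<A+g} t * h t) \<partial>lborel) =
          (h t * indicator {A<..} t) * (\<integral>\<^sup>+g. ?e g * indicator {t - A<..} g \<partial>lborel)" .
  qed
  also have "\<dots> = (\<integral>\<^sup>+t. (h t * indicator {A<..} t) * ennreal (exp (- (t - A) * lam)) \<partial>lborel)"
  proof (rule nn_integral_cong)
    fix t :: real
    show "(h t * indicator {A<..} t) * (\<integral>\<^sup>+g. ?e g * indicator {t - A<..} g \<partial>lborel) =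
          (h t * indicator {A<..} t) * ennreal (exp (- (t - A) * lam))"
    proof (cases "A < t")
      case True
      have "(\<integral>\<^sup>+g. ?e g * indicator {t - A<..} g \<partial>lborel) = (\<integral>\<^sup>+g. indicator {t - A<..} g \<partial>ED)"
        by (subst nn_integral_density) auto
      also have "\<dots> = ennreal (exp (- (t - A) * lam))" using True by (intro expo_tail) auto
      finally show ?thesis by simp
    qed auto
  qed
  finally have R: "(\<integral>\<^sup>+g. (\<integral>\<^sup>+t. indicator {A<..<A+g} t * h t \<partial>lborel) \<partial>ED) =
     (\<integral>\<^sup>+t. (h t * indicator {A<..} t) * ennreal (exp (- (t - A) * lam)) \<partial>lborel)" .
  have "(\<integral>\<^sup>+g. h (A + g) \<partial>ED) = (\<integral>\<^sup>+g. ?e g * h (A + g) \<partial>lborel)"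
    by (subst nn_integral_density) auto
  also have "\<dots> = (\<integral>\<^sup>+g. ?e ((A + g) - A) * h (A + g) \<partial>lborel)" by simp
  also have "\<dots> = (\<integral>\<^sup>+t. ?e (t - A) * h t \<partial>distr lborel borel ((+) A))"
    by (subst nn_integral_distr) auto
  also have "\<dots> = (\<integral>\<^sup>+t. ?e (t - A) * h t \<partial>lborel)" by (simp add: lborel_distr_plus)
  also have "\<dots> = (\<integral>\<^sup>+t. lam * ((h t * indicator {A<..} t) * ennreal (exp (- (t - A) * lam))) \<partial>lborel)"
  proof (rule nn_integral_cong_AE)
    show "AE t in lborel. ?e (t - A) * h t = lam * ((h t * indicator {A<..} t) * ennreal (exp (- (t - A) * lam)))"
      using AE_lborel_singleton[of A]
    proof (rule AE_mp, intro AE_I2 impI)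
      fix t :: real assume "t \<noteq> A"
      then show "?e (t - A) * h t = lam * ((h t * indicator {A<..} t) * ennreal (exp (- (t - A) * lam)))"
        using lam by (cases "A < t") (auto simp: exponential_density_def ennreal_mult' mult_ac)
    qed
  qed
  also have "\<dots> = lam * (\<integral>\<^sup>+t. (h t * indicator {A<..} t) * ennreal (exp (- (t - A) * lam)) \<partial>lborel)"
    by (rule nn_integral_cmult) simp
  finally show ?thesis using R by simp
qed

end



context adm begin

definition apz :: "nat \<Rightarrow> (nat + nat + nat \<Rightarrow> real) \<Rightarrow> real" where
  "apz k z = (\<Sum>i<k. z (Inl i))"

lemma apz_meas[measurable]: "apz k \<in> borel_measurable (PZ k)"
  unfolding apz_def by (intro borel_measurable_sum comp_meas) (auto simp: JJ_def)

lemma apz_Z: "apz k (Z k \<omega>) = ap k \<omega>"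
  by (simp add: apz_def Z_def JJ_def XX_def ap_def)

lemma XX_Inl: "XX (Inl k) = gap k" by (simp add: XX_def)

lemma Inl_notin: "Inl k \<notin> JJ k" by (auto simp: JJ_def)

lemma perk:
  fixes H :: "real \<times> (nat + nat + nat \<Rightarrow> real) \<Rightarrow> ennreal"
  assumes H[measurable]: "H \<in> borel_measurable (borel \<Otimes>\<^sub>M PZ k)"
  shows "(\<integral>\<^sup>+\<omega>. H (a k \<omega>, Z k \<omega>) \<partial>M) =
         lam * (\<integral>\<^sup>+\<omega>. (\<integral>\<^sup>+t. indicator {ap k \<omega><..<a k \<omega>} t * H (t, Z k \<omega>) \<partial>lborel) \<partial>M)"
proof -
  let ?F = "\<lambda>p::(nat + nat + nat \<Rightarrow> real) \<times> real. H (apz k (fst p) + snd p, fst p)"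
  let ?F2 = "\<lambda>p::(nat + nat + nat \<Rightarrow> real) \<times> real.
     \<integral>\<^sup>+t. indicator {apz k (fst p)<..<apz k (fst p) + snd p} t * H (t, fst p) \<partial>lborel"
  have F: "?F \<in> borel_measurable (PZ k \<Otimes>\<^sub>M borel)" by measurable
  have F2: "?F2 \<in> borel_measurable (PZ k \<Otimes>\<^sub>M borel)"
  proof (rule lborel.borel_measurable_nn_integral)
    have "(\<lambda>q::((nat + nat + nat \<Rightarrow> real) \<times> real) \<times> real.
             if apz k (fst (fst q)) < snd q \<and> snd q < apz k (fst (fst q)) + snd (fst q)
             then H (snd q, fst (fst q)) else 0) \<in> borel_measurable ((PZ k \<Otimes>\<^sub>M borel) \<Otimes>\<^sub>M borel)"
      by measurable
    moreover have "borel_measurable ((PZ k \<Otimes>\<^sub>M borel) \<Otimes>\<^sub>M lborel) = borel_measurable ((PZ k \<Otimes>\<^sub>M borel) \<Otimes>\<^sub>M (borel::real measure))"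
      by (rule measurable_cong_sets) (auto intro: sets_pair_measure_cong)
    ultimately have "(\<lambda>q::((nat + nat + nat \<Rightarrow> real) \<times> real) \<times> real.
             if apz k (fst (fst q)) < snd q \<and> snd q < apz k (fst (fst q)) + snd (fst q)
             then H (snd q, fst (fst q)) else 0) \<in> borel_measurable ((PZ k \<Otimes>\<^sub>M borel) \<Otimes>\<^sub>M lborel)" by simp
    then show "(\<lambda>(p, t). indicator {apz k (fst p)<..<apz k (fst p) + snd p} t * H (t, fst p))
        \<in> borel_measurable ((PZ k \<Otimes>\<^sub>M borel) \<Otimes>\<^sub>M lborel)"
      by (rule measurable_cong[THEN iffD1, rotated]) (auto simp: indicator_def)
  qed
  have G[measurable]: "(\<lambda>\<omega>. \<integral>\<^sup>+g. ?F2 (Z k \<omega>, g) \<partial>ED) \<in> borel_measurable M"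
  proof -
    interpret ED: prob_space ED by (rule prob_space_exponential_density[OF lam])
    have "(\<lambda>z. \<integral>\<^sup>+g. ?F2 (z, g) \<partial>ED) \<in> borel_measurable (PZ k)"
      by (rule ED.borel_measurable_nn_integral_fst) (use F2 in simp)
    then show ?thesis by measurable
  qed
  have "(\<integral>\<^sup>+\<omega>. H (a k \<omega>, Z k \<omega>) \<partial>M) = (\<integral>\<^sup>+\<omega>. ?F (restrict (\<lambda>i. XX i \<omega>) (JJ k), XX (Inl k) \<omega>) \<partial>M)"
    by (simp only: Z_def[symmetric] XX_Inl apz_Z a_eq fst_conv snd_conv)
  also have "\<dots> = (\<integral>\<^sup>+\<omega>. (\<integral>\<^sup>+g. ?F (restrict (\<lambda>i. XX i \<omega>) (JJ k), g) \<partial>distr M borel (XX (Inl k))) \<partial>M)"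
    by (rule indep_nn_single[OF Inl_notin F])
  also have "\<dots> = (\<integral>\<^sup>+\<omega>. (\<integral>\<^sup>+g. H (ap k \<omega> + g, Z k \<omega>) \<partial>ED) \<partial>M)"
    by (simp only: Z_def[symmetric] XX_Inl apz_Z fst_conv snd_conv distr_gap)
  also have "\<dots> = (\<integral>\<^sup>+\<omega>. lam * (\<integral>\<^sup>+g. ?F2 (Z k \<omega>, g) \<partial>ED) \<partial>M)"
  proof (rule nn_integral_cong)
    fix \<omega> assume w: "\<omega> \<in> space M"
    have hm: "(\<lambda>t. H (t, Z k \<omega>)) \<in> borel_measurable borel" using w by measurable
    show "(\<integral>\<^sup>+g. H (ap k \<omega> + g, Z k \<omega>) \<partial>ED) = lam * (\<integral>\<^sup>+g. ?F2 (Z k \<omega>, g) \<partial>ED)"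
      using expo_lemma[OF hm, of "ap k \<omega>"] by (simp add: apz_Z)
  qed
  also have "\<dots> = lam * (\<integral>\<^sup>+\<omega>. (\<integral>\<^sup>+g. ?F2 (Z k \<omega>, g) \<partial>ED) \<partial>M)"
    by (rule nn_integral_cmult) measurable
  also have "(\<integral>\<^sup>+\<omega>. (\<integral>\<^sup>+g. ?F2 (Z k \<omega>, g) \<partial>ED) \<partial>M) =
      (\<integral>\<^sup>+\<omega>. (\<integral>\<^sup>+g. ?F2 (restrict (\<lambda>i. XX i \<omega>) (JJ k), g) \<partial>distr M borel (XX (Inl k))) \<partial>M)"
    by (simp only: Z_def[symmetric] XX_Inl distr_gap)
  also have "\<dots> = (\<integral>\<^sup>+\<omega>. ?F2 (restrict (\<lambda>i. XX i \<omega>) (JJ k), XX (Inl k) \<omega>) \<partial>M)"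
    by (rule indep_nn_single[OF Inl_notin F2, symmetric])
  also have "\<dots> = (\<integral>\<^sup>+\<omega>. (\<integral>\<^sup>+t. indicator {ap k \<omega><..<a k \<omega>} t * H (t, Z k \<omega>) \<partial>lborel) \<partial>M)"
    by (simp only: Z_def[symmetric] XX_Inl apz_Z a_eq fst_conv snd_conv)
  finally show ?thesis .
qed

end



context adm begin

lemma ap_ge: "\<omega> \<in> Om0 \<Longrightarrow> k < j \<Longrightarrow> a k \<omega> \<le> ap j \<omega>"
  unfolding arrival_def ap_def Om0_def by (intro sum_mono2) (auto simp: less_imp_le)

lemma sum_ind_le:
  assumes w: "\<omega> \<in> Om0"
  shows "(\<Sum>k. indicator {ap k \<omega><..<a k \<omega>} t :: ennreal) \<le> indicator {0<..} t"
proof (cases "\<exists>k. t \<in> {ap k \<omega><..<a k \<omega>}")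
  case False
  then have "\<And>k. indicator {ap k \<omega><..<a k \<omega>} t = (0::ennreal)" by auto
  then show ?thesis by simp
next
  case True
  then obtain k0 where k0: "t \<in> {ap k0 \<omega><..<a k0 \<omega>}" by blast
  have other: "k \<noteq> k0 \<Longrightarrow> t \<notin> {ap k \<omega><..<a k \<omega>}" for k
  proof
    assume "k \<noteq> k0" "t \<in> {ap k \<omega><..<a k \<omega>}"
    then consider "k < k0" | "k0 < k" by linarith
    then show False
    proof cases
      case 1 then show False using ap_ge[OF w 1] k0 \<open>t \<in> {ap k \<omega><..<a k \<omega>}\<close> by auto
    next
      case 2 then show False using ap_ge[OF w 2] k0 \<open>t \<in> {ap k \<omega><..<a k \<omega>}\<close> by auto
    qed
  qed
  have "(\<Sum>k. indicator {ap k \<omega><..<a k \<omega>} t :: ennreal) = (\<Sum>k\<in>{k0}. indicator {ap k \<omega><..<a k \<omega>} t)"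
    by (rule suminf_finite) (use other in \<open>auto simp: indicator_def\<close>)
  also have "\<dots> = 1" using k0 by simp
  also have "\<dots> = indicator {0<..} t" using k0 ap_nonneg[OF w, of k0] by (auto simp: indicator_def)
  finally show ?thesis by simp
qed

lemma meas_int:
  fixes H :: "real \<times> (nat + nat + nat \<Rightarrow> real) \<Rightarrow> ennreal"
  assumes H[measurable]: "H \<in> borel_measurable (borel \<Otimes>\<^sub>M PZ k)"
  shows "(\<lambda>\<omega>. \<integral>\<^sup>+t. indicator {ap k \<omega><..<a k \<omega>} t * H (t, Z k \<omega>) \<partial>lborel) \<in> borel_measurable M"
proof (rule lborel.borel_measurable_nn_integral)
  have "(\<lambda>q::'a \<times> real. if ap k (fst q) < snd q \<and> snd q < a k (fst q) then H (snd q, Z k (fst q)) else 0)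
        \<in> borel_measurable (M \<Otimes>\<^sub>M borel)"
    by measurable
  moreover have "borel_measurable (M \<Otimes>\<^sub>M lborel) = borel_measurable (M \<Otimes>\<^sub>M (borel::real measure))"
    by (rule measurable_cong_sets) (auto intro: sets_pair_measure_cong)
  ultimately have "(\<lambda>q::'a \<times> real. if ap k (fst q) < snd q \<and> snd q < a k (fst q) then H (snd q, Z k (fst q)) else 0)
        \<in> borel_measurable (M \<Otimes>\<^sub>M lborel)" by simp
  then show "(\<lambda>(\<omega>, t). indicator {ap k \<omega><..<a k \<omega>} t * H (t, Z k \<omega>)) \<in> borel_measurable (M \<Otimes>\<^sub>M lborel)"
    by (rule measurable_cong[THEN iffD1, rotated]) (auto simp: indicator_def)
qed

lemma sum_const_top: "(\<Sum>k::nat. (1::ennreal)) = top"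
proof -
  have "\<not> summable (\<lambda>_::nat. (1::real))" by (simp add: summable_const_iff)
  then have "(\<Sum>k::nat. ennreal 1) = top" by (intro summable_iff_suminf_neq_top) auto
  then show ?thesis by simp
qed

lemma unbounded_AE: "AE \<omega> in M. \<forall>n::nat. \<exists>k. real n < a k \<omega>"
proof (subst AE_all_countable, intro allI)
  fix n :: nat
  define T where "T = real n"
  have Hm: "(\<lambda>p::real \<times> (nat + nat + nat \<Rightarrow> real). indicator {..T} (fst p) :: ennreal) \<in> borel_measurable (borel \<Otimes>\<^sub>M PZ k)" for k
    by measurable
  have "(\<integral>\<^sup>+\<omega>. (\<Sum>k. indicator {..T} (a k \<omega>)) \<partial>M) = (\<Sum>k. \<integral>\<^sup>+\<omega>. indicator {..T} (a k \<omega>) \<partial>M)"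
    by (rule nn_integral_suminf) measurable
  also have "\<dots> = (\<Sum>k. lam * (\<integral>\<^sup>+\<omega>. (\<integral>\<^sup>+t. indicator {ap k \<omega><..<a k \<omega>} t * indicator {..T} t \<partial>lborel) \<partial>M))"
    using perk[OF Hm] by simp
  also have "\<dots> = lam * (\<Sum>k. (\<integral>\<^sup>+\<omega>. (\<integral>\<^sup>+t. indicator {ap k \<omega><..<a k \<omega>} t * indicator {..T} t \<partial>lborel) \<partial>M))"
    by simp
  also have "(\<Sum>k. (\<integral>\<^sup>+\<omega>. (\<integral>\<^sup>+t. indicator {ap k \<omega><..<a k \<omega>} t * indicator {..T} t \<partial>lborel) \<partial>M)) =
      (\<integral>\<^sup>+\<omega>. (\<Sum>k. \<integral>\<^sup>+t. indicator {ap k \<omega><..<a k \<omega>} t * indicator {..T} t \<partial>lborel) \<partial>M)"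
    by (rule nn_integral_suminf[symmetric]) (use meas_int[OF Hm] in simp)
  also have "\<dots> = (\<integral>\<^sup>+\<omega>. (\<integral>\<^sup>+t. (\<Sum>k. indicator {ap k \<omega><..<a k \<omega>} t * indicator {..T} t) \<partial>lborel) \<partial>M)"
    by (intro nn_integral_cong nn_integral_suminf[symmetric]) measurable
  also have "\<dots> \<le> (\<integral>\<^sup>+\<omega>. (\<integral>\<^sup>+t. indicator {0<..T} t \<partial>lborel) \<partial>M)"
  proof (rule nn_integral_mono_AE)
    show "AE \<omega> in M. (\<integral>\<^sup>+t. (\<Sum>k. indicator {ap k \<omega><..<a k \<omega>} t * indicator {..T} t) \<partial>lborel) \<le>
          (\<integral>\<^sup>+t. indicator {0<..T} t \<partial>lborel)"
      using AE_Om0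
    proof (rule AE_mp, intro AE_I2 impI nn_integral_mono)
      fix \<omega> t assume w: "\<omega> \<in> Om0"
      have "(\<Sum>k. indicator {ap k \<omega><..<a k \<omega>} t * indicator {..T} t) =
            (\<Sum>k. indicator {ap k \<omega><..<a k \<omega>} t :: ennreal) * indicator {..T} t" by simp
      also have "\<dots> \<le> indicator {0<..} t * indicator {..T} t"
        by (intro mult_right_mono sum_ind_le[OF w]) auto
      also have "\<dots> = indicator {0<..T} t" by (auto simp: indicator_def)
      finally show "(\<Sum>k. indicator {ap k \<omega><..<a k \<omega>} t * indicator {..T} t) \<le> (indicator {0<..T} t :: ennreal)" .
    qed
  qed
  also have "\<dots> = ennreal T"
    using emeasure_space_1 by (simp add: T_def)
  finally have "(\<integral>\<^sup>+\<omega>. (\<Sum>k. indicator {..T} (a k \<omega>)) \<partial>M) \<le> lam * ennreal T"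
    by (simp add: mult_left_mono)
  then have "(\<integral>\<^sup>+\<omega>. (\<Sum>k. indicator {..T} (a k \<omega>)) \<partial>M) \<noteq> \<infinity>"
    by (auto simp: top_unique ennreal_mult_eq_top_iff)
  then have "AE \<omega> in M. (\<Sum>k. indicator {..T} (a k \<omega>) :: ennreal) \<noteq> \<infinity>"
    by (intro nn_integral_PInf_AE) measurable
  then show "AE \<omega> in M. \<exists>k. real n < a k \<omega>"
  proof (rule AE_mp, intro AE_I2 impI)
    fix \<omega> assume fin: "(\<Sum>k. indicator {..T} (a k \<omega>) :: ennreal) \<noteq> \<infinity>"
    show "\<exists>k. real n < a k \<omega>"
    proof (rule ccontr)
      assume "\<not> (\<exists>k. real n < a k \<omega>)"
      then have "\<And>k. indicator {..T} (a k \<omega>) = (1::ennreal)" by (auto simp: T_def not_less)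
      then show False using fin sum_const_top by simp
    qed
  qed
qed

end



locale adm2 = adm M lam gap U S for M :: "'a measure" and lam gap U S +
  fixes c :: nat and x :: "real \<Rightarrow> 'a \<Rightarrow> real" and G :: "real measure"
  assumes U_unif: "\<And>k. distributed M lborel (U k) (indicator {0..1})"
    and G_prob: "prob_space G" and G_sets: "sets G = sets borel" and G0: "measure G {..0} = 0"
    and S_dist: "\<And>k. distr M borel (S k) = G"
    and policy: "feasible_policy M c gap U S x"
begin

lemma x_meas: "(\<lambda>(t, \<omega>). x t \<omega>) \<in> borel_measurable PR"
  using policy unfolding feasible_policy_def by blast

lemma x_bounds: "0 \<le> t \<Longrightarrow> \<omega> \<in> space M \<Longrightarrow> 0 \<le> x t \<omega> \<and> x t \<omega> \<le> 1"
  using policy unfolding feasible_policy_def by blast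

lemma x_busy: "AE \<omega> in M. \<forall>t\<ge>0. c \<le> busy gap U S x t \<omega> \<longrightarrow> x t \<omega> = 0"
  using policy unfolding feasible_policy_def by blast


lemma U_pos_AE: "AE \<omega> in M. 0 < U k \<omega>"
proof (rule AE_I[where N="{\<omega>\<in>space M. U k \<omega> \<le> 0}"])
  show "{\<omega> \<in> space M. \<not> 0 < U k \<omega>} \<subseteq> {\<omega>\<in>space M. U k \<omega> \<le> 0}" by auto
  have [measurable]: "U k \<in> borel_measurable M" by (rule U_meas)
  show "{\<omega>\<in>space M. U k \<omega> \<le> 0} \<in> sets M" by measurable
  have "emeasure M {\<omega>\<in>space M. U k \<omega> \<le> 0} = emeasure (distr M lborel (U k)) {..0}"
    by (subst emeasure_distr) (auto intro!: arg_cong2[where f=emeasure])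
  also have "\<dots> = emeasure (density lborel (indicator {0..1})) {..(0::real)}"
    using distributed_distr_eq_density[OF U_unif[of k]] by metis
  also have "\<dots> = (\<integral>\<^sup>+u. indicator {0..1} u * indicator {..0} u \<partial>(lborel::real measure))"
    by (subst emeasure_density) auto
  also have "\<dots> = (\<integral>\<^sup>+u. indicator {0} u \<partial>(lborel::real measure))"
    by (intro nn_integral_cong) (auto simp: indicator_def)
  also have "\<dots> = 0" by simp
  finally show "emeasure M {\<omega>\<in>space M. U k \<omega> \<le> 0} = 0" .
qed

definition Om1 :: "'a set" where
  "Om1 = {\<omega>\<in>Om0. (\<forall>n::nat. \<exists>k. real n < a k \<omega>) \<and> (\<forall>k. 0 < U k \<omega>) \<and>
            (\<forall>t\<ge>0. c \<le> busy gap U S x t \<omega> \<longrightarrow> x t \<omega> = 0)}"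

lemma AE_Om1: "AE \<omega> in M. \<omega> \<in> Om1"
proof -
  have "AE \<omega> in M. \<forall>k. 0 < U k \<omega>" using U_pos_AE by (simp add: AE_all_countable)
  then show ?thesis using AE_Om0 unbounded_AE x_busy by (auto simp: Om1_def)
qed

definition busyset :: "real \<Rightarrow> 'a \<Rightarrow> nat set" where
  "busyset t \<omega> = {k. admitted gap U x k \<omega> \<and> a k \<omega> < t \<and> t < a k \<omega> + S k \<omega>}"

lemma busy_eq: "busy gap U S x t \<omega> = card (busyset t \<omega>)"
  by (simp add: busy_def busyset_def)

lemma Om1_Om0: "\<omega> \<in> Om1 \<Longrightarrow> \<omega> \<in> Om0" by (simp add: Om1_def)

lemma a_pos: "\<omega> \<in> Om0 \<Longrightarrow> 0 < a k \<omega>"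
  using ap_nonneg[of \<omega> k] by (auto simp: a_eq Om0_def intro: add_nonneg_pos)

lemma finite_before:
  assumes w: "\<omega> \<in> Om1"
  shows "finite {k. a k \<omega> < t}"
proof -
  obtain n :: nat where "t \<le> real n" using real_arch_simple by blast
  moreover obtain K where "real n < a K \<omega>" using w unfolding Om1_def by blast
  ultimately have "{k. a k \<omega> < t} \<subseteq> {..<K}"
    using a_mono[OF Om1_Om0[OF w]] by (auto simp: not_less[symmetric]) (meson le_less_trans less_le_not_le not_le)
  then show ?thesis using finite_subset by blast
qed

lemma finite_busyset: "\<omega> \<in> Om1 \<Longrightarrow> finite (busyset t \<omega>)"
  by (rule finite_subset[OF _ finite_before]) (auto simp: busyset_def)

lemma busy_le:
  assumes w: "\<omega> \<in> Om1"
  shows "card (busyset t \<omega>) \<le> c"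
proof (rule ccontr)
  assume "\<not> card (busyset t \<omega>) \<le> c"
  then have cgt: "c < card (busyset t \<omega>)" by simp
  let ?K = "busyset t \<omega>"
  have fin: "finite ?K" by (rule finite_busyset[OF w])
  have ne: "?K \<noteq> {}" using cgt by auto
  define k where "k = Max ?K"
  have kK: "k \<in> ?K" unfolding k_def using fin ne by (rule Max_in)
  have sub: "?K - {k} \<subseteq> busyset (a k \<omega>) \<omega>"
  proof
    fix j assume j: "j \<in> ?K - {k}"
    then have "j < k" using Max_ge[OF fin, of j] by (auto simp: k_def)
    then have "a j \<omega> < a k \<omega>" by (rule a_strict[OF Om1_Om0[OF w]])
    moreover have "a k \<omega> < t" using kK by (simp add: busyset_def)
    ultimately show "j \<in> busyset (a k \<omega>) \<omega>" using j by (auto simp: busyset_def)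
  qed
  have "c \<le> card (?K - {k})" using cgt kK fin by (simp add: card_Diff_singleton)
  also have "\<dots> \<le> card (busyset (a k \<omega>) \<omega>)" by (rule card_mono[OF finite_busyset[OF w] sub])
  finally have "c \<le> busy gap U S x (a k \<omega>) \<omega>" by (simp add: busy_eq)
  then have "x (a k \<omega>) \<omega> = 0"
    using w a_pos[OF Om1_Om0[OF w], of k] by (auto simp: Om1_def)
  moreover have "admitted gap U x k \<omega>" using kK by (simp add: busyset_def)
  ultimately have "U k \<omega> \<le> 0" by (simp add: admitted_def)
  then show False using w by (auto simp: Om1_def not_le[symmetric])
qed

lemma pathwise:
  assumes w: "\<omega> \<in> Om1" and T: "0 \<le> T"
  shows "(\<Sum>k. indicator {\<omega>. admitted gap U x k \<omega>} \<omega> * indicator {..<T} (a k \<omega>) *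
            ennreal (min (S k \<omega>) (T - a k \<omega>))) \<le> of_nat c * ennreal T"
proof -
  let ?B = "\<lambda>k t. indicator {\<omega>. admitted gap U x k \<omega>} \<omega> * indicator {a k \<omega><..<a k \<omega> + S k \<omega>} t * (indicator {..<T} t :: ennreal)"
  have le: "indicator {\<omega>. admitted gap U x k \<omega>} \<omega> * indicator {..<T} (a k \<omega>) *
            ennreal (min (S k \<omega>) (T - a k \<omega>)) \<le> (\<integral>\<^sup>+t. ?B k t \<partial>lborel)" for k
  proof (cases "admitted gap U x k \<omega> \<and> a k \<omega> < T \<and> 0 \<le> S k \<omega>")
    case True
    have "(\<integral>\<^sup>+t. ?B k t \<partial>lborel) = (\<integral>\<^sup>+t. indicator {a k \<omega><..<min (a k \<omega> + S k \<omega>) T} t \<partial>lborel)"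
      using True by (intro nn_integral_cong) (auto simp: indicator_def)
    also have "\<dots> = ennreal (min (a k \<omega> + S k \<omega>) T - a k \<omega>)"
      using True by simp
    finally show ?thesis using True by (simp add: min_diff_distrib_left)
  next
    case False
    then show ?thesis by (auto simp: indicator_def ennreal_neg)
  qed
  have "(\<Sum>k. indicator {\<omega>. admitted gap U x k \<omega>} \<omega> * indicator {..<T} (a k \<omega>) *
            ennreal (min (S k \<omega>) (T - a k \<omega>))) \<le> (\<Sum>k. \<integral>\<^sup>+t. ?B k t \<partial>lborel)"
    by (intro suminf_le le) auto
  also have "\<dots> = (\<integral>\<^sup>+t. (\<Sum>k. ?B k t) \<partial>lborel)"
    by (rule nn_integral_suminf[symmetric]) simp
  also have "\<dots> \<le> (\<integral>\<^sup>+t. of_nat c * indicator {0..T} t \<partial>lborel)"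
  proof (rule nn_integral_mono)
    fix t
    have "(\<Sum>k. ?B k t) = (\<Sum>k\<in>busyset t \<omega>. ?B k t)"
      by (rule suminf_finite[OF finite_busyset[OF w]]) (auto simp: busyset_def indicator_def)
    also have "\<dots> = (\<Sum>k\<in>busyset t \<omega>. indicator {..<T} t)"
      by (intro sum.cong) (auto simp: busyset_def indicator_def)
    also have "\<dots> = of_nat (card (busyset t \<omega>)) * indicator {..<T} t" by simp
    also have "\<dots> \<le> of_nat c * indicator {0..T} t"
    proof (cases "0 \<le> t")
      case True
      then show ?thesis using busy_le[OF w, of t]
        by (intro mult_mono) (auto simp: indicator_def)
    next
      case False
      have "busyset t \<omega> = {}"
      proof (rule ccontr)
        assume "busyset t \<omega> \<noteq> {}"
        then obtain k where "k \<in> busyset t \<omega>" by blast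
        then have "a k \<omega> < t" by (simp add: busyset_def)
        with a_pos[OF Om1_Om0[OF w], of k] False show False by linarith
      qed
      then show ?thesis by simp
    qed
    finally show "(\<Sum>k. ?B k t) \<le> of_nat c * indicator {0..T} t" .
  qed
  also have "\<dots> = of_nat c * ennreal T"
    using T by (subst nn_integral_cmult) auto
  finally show ?thesis .
qed

end



context adm2 begin

lemma xe_meas: "(\<lambda>p. ennreal (case p of (t, \<omega>) \<Rightarrow> x t \<omega>)) \<in> borel_measurable PR"
  using x_meas by measurable

definition hh :: "nat \<Rightarrow> real \<times> (nat + nat + nat \<Rightarrow> real) \<Rightarrow> ennreal" where
  "hh k = (SOME h. h \<in> borel_measurable (borel \<Otimes>\<^sub>M PZ k) \<and>
      (\<forall>\<omega>\<in>Om0. \<forall>t. ap k \<omega> < t \<and> t \<le> a k \<omega> \<longrightarrow> ennreal (x t \<omega>) = h (t, Z k \<omega>)))"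

lemma hh: "hh k \<in> borel_measurable (borel \<Otimes>\<^sub>M PZ k) \<and>
      (\<forall>\<omega>\<in>Om0. \<forall>t. ap k \<omega> < t \<and> t \<le> a k \<omega> \<longrightarrow> ennreal (x t \<omega>) = hh k (t, Z k \<omega>))"
proof -
  from repfun[OF xe_meas, of k] have "\<exists>h. h \<in> borel_measurable (borel \<Otimes>\<^sub>M PZ k) \<and>
      (\<forall>\<omega>\<in>Om0. \<forall>t. ap k \<omega> < t \<and> t \<le> a k \<omega> \<longrightarrow> ennreal (x t \<omega>) = h (t, Z k \<omega>))" by auto
  then show ?thesis unfolding hh_def by (rule someI_ex)
qed

lemma hh_meas[measurable]: "hh k \<in> borel_measurable (borel \<Otimes>\<^sub>M PZ k)"
  using hh by blast

lemma hh_x: "\<omega> \<in> Om0 \<Longrightarrow> ap k \<omega> < t \<Longrightarrow> t \<le> a k \<omega> \<Longrightarrow> hh k (t, Z k \<omega>) = ennreal (x t \<omega>)"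
  using hh by metis

lemma x_in: "\<omega> \<in> Om0 \<Longrightarrow> ap k \<omega> < t \<Longrightarrow> 0 \<le> x t \<omega> \<and> x t \<omega> \<le> 1"
  using x_bounds[of t \<omega>] ap_nonneg[of \<omega> k] Om0_sub by auto

lemma hh_x_real: "\<omega> \<in> Om0 \<Longrightarrow> ap k \<omega> < t \<Longrightarrow> t \<le> a k \<omega> \<Longrightarrow> enn2real (hh k (t, Z k \<omega>)) = x t \<omega>"
  using hh_x[of \<omega> k t] x_in[of \<omega> k t] by simp

lemma hh_clip: "\<omega> \<in> Om0 \<Longrightarrow> ap k \<omega> < t \<Longrightarrow> t \<le> a k \<omega> \<Longrightarrow>
   ennreal (min 1 (enn2real (hh k (t, Z k \<omega>)))) = ennreal (x t \<omega>)"
  using hh_x_real[of \<omega> k t] x_in[of \<omega> k t] by simp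

definition mE :: "real \<Rightarrow> ennreal" where
  "mE u = (\<integral>\<^sup>+s. ennreal (min s u) \<partial>G)"

lemma mE_mono: "u \<le> v \<Longrightarrow> mE u \<le> mE v"
  unfolding mE_def by (intro nn_integral_mono) (auto intro: ennreal_leI)

lemma mE_meas[measurable]: "mE \<in> borel_measurable borel"
proof -
  interpret G: prob_space G by (rule G_prob)
  have m: "(\<lambda>p::real \<times> real. ennreal (min (snd p) (fst p))) \<in> borel_measurable (borel \<Otimes>\<^sub>M borel)"
    by measurable
  have eq: "borel_measurable ((borel::real measure) \<Otimes>\<^sub>M G) = borel_measurable (borel \<Otimes>\<^sub>M (borel::real measure))"
    by (rule measurable_cong_sets) (auto intro: sets_pair_measure_cong simp: G_sets)
  have "(\<lambda>(u, s). ennreal (min s u)) \<in> borel_measurable (borel \<Otimes>\<^sub>M G)"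
    unfolding eq using m by (simp add: split_beta')
  then show ?thesis unfolding mE_def by (rule G.borel_measurable_nn_integral)
qed

lemma distr_S: "distr M borel (XX (Inr (Inr k))) = G"
  by (simp add: XX_def S_dist)

lemma distr_U: "distr M borel (XX (Inr (Inl k))) = density lborel (indicator {0..1})"
proof -
  have "distr M borel (U k) = distr M lborel (U k)" by (rule distr_cong) auto
  then show ?thesis using distributed_distr_eq_density[OF U_unif[of k]] by (simp add: XX_def)
qed

lemma integrate_S:
  fixes \<Phi> :: "(nat + nat + nat \<Rightarrow> real) \<Rightarrow> ennreal" and b :: "(nat + nat + nat \<Rightarrow> real) \<Rightarrow> real"
  assumes j: "Inr (Inr k) \<notin> A"
    and \<Phi>[measurable]: "\<Phi> \<in> borel_measurable (PiM A (\<lambda>_. borel))"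
    and b[measurable]: "b \<in> borel_measurable (PiM A (\<lambda>_. borel))"
  shows "(\<integral>\<^sup>+\<omega>. \<Phi> (restrict (\<lambda>i. XX i \<omega>) A) * ennreal (min (S k \<omega>) (b (restrict (\<lambda>i. XX i \<omega>) A))) \<partial>M) =
         (\<integral>\<^sup>+\<omega>. \<Phi> (restrict (\<lambda>i. XX i \<omega>) A) * mE (b (restrict (\<lambda>i. XX i \<omega>) A)) \<partial>M)"
proof -
  let ?F = "\<lambda>p. \<Phi> (fst p) * ennreal (min (snd p) (b (fst p)))"
  have F: "?F \<in> borel_measurable (PiM A (\<lambda>_. borel) \<Otimes>\<^sub>M borel)" by measurable
  have "(\<integral>\<^sup>+\<omega>. \<Phi> (restrict (\<lambda>i. XX i \<omega>) A) * ennreal (min (S k \<omega>) (b (restrict (\<lambda>i. XX i \<omega>) A))) \<partial>M) =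
        (\<integral>\<^sup>+\<omega>. ?F (restrict (\<lambda>i. XX i \<omega>) A, XX (Inr (Inr k)) \<omega>) \<partial>M)"
    by (simp add: XX_def)
  also have "\<dots> = (\<integral>\<^sup>+\<omega>. (\<integral>\<^sup>+y. ?F (restrict (\<lambda>i. XX i \<omega>) A, y) \<partial>distr M borel (XX (Inr (Inr k)))) \<partial>M)"
    by (rule indep_nn_single[OF j F])
  also have "\<dots> = (\<integral>\<^sup>+\<omega>. \<Phi> (restrict (\<lambda>i. XX i \<omega>) A) * mE (b (restrict (\<lambda>i. XX i \<omega>) A)) \<partial>M)"
  proof (rule nn_integral_cong)
    fix \<omega> assume "\<omega> \<in> space M"
    have "(\<integral>\<^sup>+y. ?F (restrict (\<lambda>i. XX i \<omega>) A, y) \<partial>G) =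
          \<Phi> (restrict (\<lambda>i. XX i \<omega>) A) * (\<integral>\<^sup>+y. ennreal (min y (b (restrict (\<lambda>i. XX i \<omega>) A))) \<partial>G)"
      by (subst nn_integral_cmult[symmetric]) (auto simp: measurable_cong_sets[OF G_sets refl])
    then show "(\<integral>\<^sup>+y. ?F (restrict (\<lambda>i. XX i \<omega>) A, y) \<partial>distr M borel (XX (Inr (Inr k)))) =
          \<Phi> (restrict (\<lambda>i. XX i \<omega>) A) * mE (b (restrict (\<lambda>i. XX i \<omega>) A))"
      by (simp add: distr_S mE_def)
  qed
  finally show ?thesis .
qed

lemma integrate_U:
  fixes \<Psi> :: "(nat + nat + nat \<Rightarrow> real) \<Rightarrow> ennreal" and \<phi> :: "(nat + nat + nat \<Rightarrow> real) \<Rightarrow> real"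
  assumes j: "Inr (Inl k) \<notin> A"
    and \<Psi>[measurable]: "\<Psi> \<in> borel_measurable (PiM A (\<lambda>_. borel))"
    and \<phi>[measurable]: "\<phi> \<in> borel_measurable (PiM A (\<lambda>_. borel))"
    and \<phi>0: "\<And>v. 0 \<le> \<phi> v"
  shows "(\<integral>\<^sup>+\<omega>. indicator {\<omega>. U k \<omega> \<le> \<phi> (restrict (\<lambda>i. XX i \<omega>) A)} \<omega> * \<Psi> (restrict (\<lambda>i. XX i \<omega>) A) \<partial>M) =
         (\<integral>\<^sup>+\<omega>. ennreal (min 1 (\<phi> (restrict (\<lambda>i. XX i \<omega>) A))) * \<Psi> (restrict (\<lambda>i. XX i \<omega>) A) \<partial>M)"
proof -
  let ?F = "\<lambda>p. indicator {..\<phi> (fst p)} (snd p) * \<Psi> (fst p)"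
  have F: "?F \<in> borel_measurable (PiM A (\<lambda>_. borel) \<Otimes>\<^sub>M borel)"
  proof -
    have "(\<lambda>p. (if snd p \<le> \<phi> (fst p) then \<Psi> (fst p) else 0)) \<in> borel_measurable (PiM A (\<lambda>_. borel) \<Otimes>\<^sub>M borel)"
      by measurable
    then show ?thesis by (rule measurable_cong[THEN iffD1, rotated]) (auto simp: indicator_def)
  qed
  have "(\<integral>\<^sup>+\<omega>. indicator {\<omega>. U k \<omega> \<le> \<phi> (restrict (\<lambda>i. XX i \<omega>) A)} \<omega> * \<Psi> (restrict (\<lambda>i. XX i \<omega>) A) \<partial>M) =
        (\<integral>\<^sup>+\<omega>. ?F (restrict (\<lambda>i. XX i \<omega>) A, XX (Inr (Inl k)) \<omega>) \<partial>M)"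
    by (intro nn_integral_cong) (simp add: XX_def indicator_def)
  also have "\<dots> = (\<integral>\<^sup>+\<omega>. (\<integral>\<^sup>+y. ?F (restrict (\<lambda>i. XX i \<omega>) A, y) \<partial>distr M borel (XX (Inr (Inl k)))) \<partial>M)"
    by (rule indep_nn_single[OF j F])
  also have "\<dots> = (\<integral>\<^sup>+\<omega>. ennreal (min 1 (\<phi> (restrict (\<lambda>i. XX i \<omega>) A))) * \<Psi> (restrict (\<lambda>i. XX i \<omega>) A) \<partial>M)"
  proof (rule nn_integral_cong)
    fix \<omega> assume "\<omega> \<in> space M"
    define v where "v = \<phi> (restrict (\<lambda>i. XX i \<omega>) A)"
    have v0: "0 \<le> v" using \<phi>0 by (simp add: v_def)
    have "(\<integral>\<^sup>+y. ?F (restrict (\<lambda>i. XX i \<omega>) A, y) \<partial>density lborel (indicator {0..1})) =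
          (\<integral>\<^sup>+y. indicator {0..1} y * (indicator {..v} y * \<Psi> (restrict (\<lambda>i. XX i \<omega>) A)) \<partial>lborel)"
      by (subst nn_integral_density) (auto simp: v_def)
    also have "\<dots> = (\<integral>\<^sup>+y. \<Psi> (restrict (\<lambda>i. XX i \<omega>) A) * indicator {0..min 1 v} y \<partial>lborel)"
      by (intro nn_integral_cong) (auto simp: indicator_def)
    also have "\<dots> = \<Psi> (restrict (\<lambda>i. XX i \<omega>) A) * emeasure lborel {0..min 1 v}"
      by (subst nn_integral_cmult) auto
    also have "\<dots> = ennreal (min 1 v) * \<Psi> (restrict (\<lambda>i. XX i \<omega>) A)"
      using v0 by (simp add: mult.commute)
    finally show "(\<integral>\<^sup>+y. ?F (restrict (\<lambda>i. XX i \<omega>) A, y) \<partial>distr M borel (XX (Inr (Inl k)))) =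
         ennreal (min 1 (\<phi> (restrict (\<lambda>i. XX i \<omega>) A))) * \<Psi> (restrict (\<lambda>i. XX i \<omega>) A)"
      by (simp add: distr_U v_def)
  qed
  finally show ?thesis .
qed

end



context adm2 begin

lemma restr_Z: "JJ k \<subseteq> B \<Longrightarrow> restrict (restrict (\<lambda>i. XX i \<omega>) B) (JJ k) = Z k \<omega>"
  by (simp add: Z_def Int_absorb1 inf_commute)

lemma XX_U: "XX (Inr (Inl k)) = U k" by (simp add: XX_def)

definition Hk :: "nat \<Rightarrow> real \<Rightarrow> real \<times> (nat + nat + nat \<Rightarrow> real) \<Rightarrow> ennreal" where
  "Hk k T p = ennreal (min 1 (enn2real (hh k p))) * indicator {..<T} (fst p) * mE (T - fst p)"

lemma Hk_meas[measurable]: "Hk k T \<in> borel_measurable (borel \<Otimes>\<^sub>M PZ k)"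
  unfolding Hk_def by measurable

lemma Qk:
  "(\<integral>\<^sup>+\<omega>. indicator {\<omega>. U k \<omega> \<le> enn2real (hh k (a k \<omega>, Z k \<omega>))} \<omega> * indicator {..<T} (a k \<omega>) *
      ennreal (min (S k \<omega>) (T - a k \<omega>)) \<partial>M) =
   lam * (\<integral>\<^sup>+\<omega>. (\<integral>\<^sup>+t. indicator {ap k \<omega><..<a k \<omega>} t * Hk k T (t, Z k \<omega>) \<partial>lborel) \<partial>M)"
proof -
  define A3 where "A3 = JJ k \<union> {Inl k, Inr (Inl k)}"
  define A2 where "A2 = JJ k \<union> {Inl k}"
  have J3: "JJ k \<subseteq> A3" and J2: "JJ k \<subseteq> A2" by (auto simp: A3_def A2_def)
  have n3: "Inr (Inr k) \<notin> A3" and n2: "Inr (Inl k) \<notin> A2" by (auto simp: A3_def A2_def JJ_def)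
  have i3: "Inl k \<in> A3" "Inr (Inl k) \<in> A3" and i2: "Inl k \<in> A2" by (auto simp: A3_def A2_def)
  have I3: "A3 \<inter> JJ k = JJ k" and I2: "A2 \<inter> JJ k = JJ k" using J3 J2 by auto
  have r3: "(\<lambda>v. restrict v (JJ k)) \<in> measurable (PiM A3 (\<lambda>_. borel)) (PZ k)"
    by (rule measurable_restrict_subset[OF J3])
  have r2: "(\<lambda>v. restrict v (JJ k)) \<in> measurable (PiM A2 (\<lambda>_. borel)) (PZ k)"
    by (rule measurable_restrict_subset[OF J2])
  have c31: "(\<lambda>v. v (Inl k)) \<in> borel_measurable (PiM A3 (\<lambda>_. borel))"
    by (rule measurable_component_singleton[OF i3(1)])
  have c32: "(\<lambda>v. v (Inr (Inl k))) \<in> borel_measurable (PiM A3 (\<lambda>_. borel))"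
    by (rule measurable_component_singleton[OF i3(2)])
  have c21: "(\<lambda>v. v (Inl k)) \<in> borel_measurable (PiM A2 (\<lambda>_. borel))"
    by (rule measurable_component_singleton[OF i2])
  define aA where "aA v = apz k (restrict v (JJ k)) + v (Inl k)" for v :: "nat + nat + nat \<Rightarrow> real"
  have aA3: "aA \<in> borel_measurable (PiM A3 (\<lambda>_. borel))" unfolding aA_def
    by (intro borel_measurable_add measurable_compose[OF r3 apz_meas] c31)
  have aA2: "aA \<in> borel_measurable (PiM A2 (\<lambda>_. borel))" unfolding aA_def
    by (intro borel_measurable_add measurable_compose[OF r2 apz_meas] c21)
  have hA3: "(\<lambda>v. enn2real (hh k (aA v, restrict v (JJ k)))) \<in> borel_measurable (PiM A3 (\<lambda>_. borel))"
    using measurable_compose[OF measurable_compose[OF measurable_Pair[OF aA3 r3] hh_meas] borel_measurable_enn2real]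
    by simp
  have hA2: "(\<lambda>v. enn2real (hh k (aA v, restrict v (JJ k)))) \<in> borel_measurable (PiM A2 (\<lambda>_. borel))"
    using measurable_compose[OF measurable_compose[OF measurable_Pair[OF aA2 r2] hh_meas] borel_measurable_enn2real]
    by simp
  have aA3_eq: "aA (restrict (\<lambda>i. XX i \<omega>) A3) = a k \<omega>" for \<omega>
    using i3 by (simp add: aA_def I3 Z_def[symmetric] apz_Z a_eq XX_Inl)
  have aA2_eq: "aA (restrict (\<lambda>i. XX i \<omega>) A2) = a k \<omega>" for \<omega>
    using i2 by (simp add: aA_def I2 Z_def[symmetric] apz_Z a_eq XX_Inl)
  define \<Phi> where "\<Phi> v = indicator {v. v (Inr (Inl k)) \<le> enn2real (hh k (aA v, restrict v (JJ k)))} v *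
      (indicator {..<T} (aA v) :: ennreal)" for v
  have \<Phi>m: "\<Phi> \<in> borel_measurable (PiM A3 (\<lambda>_. borel))"
  proof -
    have "(\<lambda>v. if v (Inr (Inl k)) \<le> enn2real (hh k (aA v, restrict v (JJ k))) then indicator {..<T} (aA v) else (0::ennreal))
       \<in> borel_measurable (PiM A3 (\<lambda>_. borel))"
      by (intro measurable_If borel_measurable_le c32 hA3 measurable_compose[OF aA3] borel_measurable_indicator) auto
    then show ?thesis by (rule measurable_cong[THEN iffD1, rotated]) (auto simp: \<Phi>_def indicator_def)
  qed
  define \<Psi> where "\<Psi> v = (indicator {..<T} (aA v) :: ennreal) * mE (T - aA v)" for v
  have \<Psi>m: "\<Psi> \<in> borel_measurable (PiM A2 (\<lambda>_. borel))" unfolding \<Psi>_def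
    by (intro borel_measurable_times measurable_compose[OF aA2] borel_measurable_indicator mE_meas
       borel_measurable_diff borel_measurable_const) auto
  define \<phi> where "\<phi> v = enn2real (hh k (aA v, restrict v (JJ k)))" for v
  have \<phi>m: "\<phi> \<in> borel_measurable (PiM A2 (\<lambda>_. borel))" unfolding \<phi>_def by (rule hA2)
  have "(\<integral>\<^sup>+\<omega>. indicator {\<omega>. U k \<omega> \<le> enn2real (hh k (a k \<omega>, Z k \<omega>))} \<omega> * indicator {..<T} (a k \<omega>) *
      ennreal (min (S k \<omega>) (T - a k \<omega>)) \<partial>M) =
      (\<integral>\<^sup>+\<omega>. \<Phi> (restrict (\<lambda>i. XX i \<omega>) A3) * ennreal (min (S k \<omega>) ((\<lambda>v. T - aA v) (restrict (\<lambda>i. XX i \<omega>) A3))) \<partial>M)"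
    using i3 by (intro nn_integral_cong) (simp add: \<Phi>_def aA3_eq I3 Z_def[symmetric] indicator_def XX_U)
  also have "\<dots> = (\<integral>\<^sup>+\<omega>. \<Phi> (restrict (\<lambda>i. XX i \<omega>) A3) * mE ((\<lambda>v. T - aA v) (restrict (\<lambda>i. XX i \<omega>) A3)) \<partial>M)"
    by (rule integrate_S[OF n3 \<Phi>m]) (intro borel_measurable_diff borel_measurable_const aA3)
  also have "\<dots> = (\<integral>\<^sup>+\<omega>. indicator {\<omega>. U k \<omega> \<le> \<phi> (restrict (\<lambda>i. XX i \<omega>) A2)} \<omega> * \<Psi> (restrict (\<lambda>i. XX i \<omega>) A2) \<partial>M)"
    using i3 by (intro nn_integral_cong) (simp add: \<Phi>_def \<Psi>_def \<phi>_def aA3_eq aA2_eq I3 Z_def[symmetric] I2 Z_def[symmetric] indicator_def XX_U)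
  also have "\<dots> = (\<integral>\<^sup>+\<omega>. ennreal (min 1 (\<phi> (restrict (\<lambda>i. XX i \<omega>) A2))) * \<Psi> (restrict (\<lambda>i. XX i \<omega>) A2) \<partial>M)"
    by (rule integrate_U[OF n2 \<Psi>m \<phi>m]) (simp add: \<phi>_def)
  also have "\<dots> = (\<integral>\<^sup>+\<omega>. Hk k T (a k \<omega>, Z k \<omega>) \<partial>M)"
    by (intro nn_integral_cong) (simp add: Hk_def \<Psi>_def \<phi>_def aA2_eq I2 Z_def[symmetric] mult.assoc)
  also have "\<dots> = lam * (\<integral>\<^sup>+\<omega>. (\<integral>\<^sup>+t. indicator {ap k \<omega><..<a k \<omega>} t * Hk k T (t, Z k \<omega>) \<partial>lborel) \<partial>M)"
    by (rule perk) (rule Hk_meas)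
  finally show ?thesis .
qed

end



context adm2 begin

lemma adm_meas: "(\<lambda>\<omega>. indicator {\<omega>. U k \<omega> \<le> enn2real (hh k (a k \<omega>, Z k \<omega>))} \<omega> * indicator {..<T} (a k \<omega>) *
      ennreal (min (S k \<omega>) (T - a k \<omega>)) :: ennreal) \<in> borel_measurable M"
proof -
  have [measurable]: "U k \<in> borel_measurable M" "S k \<in> borel_measurable M" by (rule U_meas S_meas)+
  have "(\<lambda>\<omega>. if U k \<omega> \<le> enn2real (hh k (a k \<omega>, Z k \<omega>)) then indicator {..<T} (a k \<omega>) *
      ennreal (min (S k \<omega>) (T - a k \<omega>)) else (0::ennreal)) \<in> borel_measurable M"
    by measurable
  then show ?thesis by (rule measurable_cong[THEN iffD1, rotated]) (auto simp: indicator_def)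
qed

lemma Hk_t_meas: "\<omega> \<in> space M \<Longrightarrow> (\<lambda>t. indicator {ap k \<omega><..<a k \<omega>} t * Hk k T (t, Z k \<omega>)) \<in> borel_measurable borel"
proof -
  assume w: "\<omega> \<in> space M"
  have "Z k \<omega> \<in> space (PZ k)" using measurable_space[OF Z_meas w] .
  then have [measurable]: "(\<lambda>t. Hk k T (t, Z k \<omega>)) \<in> borel_measurable borel"
    using measurable_compose[OF measurable_Pair2' Hk_meas] by blast
  show ?thesis by measurable
qed

lemma ap_Suc: "ap (Suc j) \<omega> = a j \<omega>"
  by (simp add: ap_def arrival_def lessThan_Suc_atMost)

lemma find_k:
  assumes w: "\<omega> \<in> Om1" and t: "0 < t" and tn: "\<forall>k. t \<noteq> a k \<omega>"
  shows "\<exists>k. ap k \<omega> < t \<and> t < a k \<omega>"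
proof -
  obtain n :: nat where "t < real n" using reals_Archimedean2 by blast
  moreover obtain K where "real n < a K \<omega>" using w unfolding Om1_def by blast
  ultimately have ex: "\<exists>k. t < a k \<omega>" by (intro exI[of _ K]) simp
  define k where "k = (LEAST k. t < a k \<omega>)"
  have tk: "t < a k \<omega>" unfolding k_def by (rule LeastI_ex[OF ex])
  have "ap k \<omega> < t"
  proof (cases k)
    case 0 then show ?thesis using t by (simp add: ap_def)
  next
    case (Suc j)
    then have "\<not> t < a j \<omega>" using not_less_Least[of j "\<lambda>k. t < a k \<omega>"] by (simp add: k_def)
    then have "a j \<omega> < t" using tn[rule_format, of j] by auto
    then show ?thesis by (simp add: Suc ap_Suc)
  qed
  with tk show ?thesis by blast
qed

lemma key_bound:
  assumes T: "0 \<le> T" and L: "0 \<le> L"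
  shows "lam * (\<integral>\<^sup>+\<omega>. (\<integral>\<^sup>+t. indicator {0<..<T-L} t * ennreal (x t \<omega>) * mE L \<partial>lborel) \<partial>M)
         \<le> of_nat c * ennreal T"
proof -
  let ?adm = "\<lambda>k \<omega>. indicator {\<omega>. U k \<omega> \<le> enn2real (hh k (a k \<omega>, Z k \<omega>))} \<omega> * indicator {..<T} (a k \<omega>) *
      ennreal (min (S k \<omega>) (T - a k \<omega>)) :: ennreal"
  let ?I = "\<lambda>k \<omega> t. indicator {ap k \<omega><..<a k \<omega>} t * Hk k T (t, Z k \<omega>)"
  have "lam * (\<integral>\<^sup>+\<omega>. (\<integral>\<^sup>+t. indicator {0<..<T-L} t * ennreal (x t \<omega>) * mE L \<partial>lborel) \<partial>M)
      \<le> lam * (\<integral>\<^sup>+\<omega>. (\<integral>\<^sup>+t. (\<Sum>k. ?I k \<omega> t) \<partial>lborel) \<partial>M)"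
  proof (intro mult_left_mono nn_integral_mono_AE)
    show "AE \<omega> in M. (\<integral>\<^sup>+t. indicator {0<..<T-L} t * ennreal (x t \<omega>) * mE L \<partial>lborel) \<le>
                   (\<integral>\<^sup>+t. (\<Sum>k. ?I k \<omega> t) \<partial>lborel)"
    proof (rule AE_mp[OF AE_Om1 AE_I2], rule impI, rule nn_integral_mono_AE)
      fix \<omega> assume w: "\<omega> \<in> Om1"
      have w0: "\<omega> \<in> Om0" by (rule Om1_Om0[OF w])
      have "AE t in lborel. t \<notin> range (\<lambda>k. a k \<omega>)"
        by (intro AE_not_in countable_imp_null_set_lborel) auto
      then show "AE t in lborel. indicator {0<..<T-L} t * ennreal (x t \<omega>) * mE L \<le> (\<Sum>k. ?I k \<omega> t)"
      proof (rule AE_mp, intro AE_I2 impI)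
        fix t assume tn: "t \<notin> range (\<lambda>k. a k \<omega>)"
        show "indicator {0<..<T-L} t * ennreal (x t \<omega>) * mE L \<le> (\<Sum>k. ?I k \<omega> t)"
        proof (cases "0 < t \<and> t < T - L")
          case True
          then obtain k where k: "ap k \<omega> < t" "t < a k \<omega>"
            using find_k[OF w, of t] tn by auto
          have "indicator {0<..<T-L} t * ennreal (x t \<omega>) * mE L = ennreal (x t \<omega>) * mE L"
            using True by simp
          also have "\<dots> \<le> ennreal (x t \<omega>) * mE (T - t)"
            using True by (intro mult_left_mono mE_mono) auto
          also have "\<dots> = ?I k \<omega> t"
            using k True hh_clip[OF w0 k(1), of] L by (simp add: Hk_def)
          also have "\<dots> \<le> (\<Sum>k. ?I k \<omega> t)"
          proof -
            have "(\<Sum>i\<in>{k}. ?I i \<omega> t) \<le> (\<Sum>k. ?I k \<omega> t)"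
              by (rule sum_le_suminf) (auto intro: summableI)
            then show ?thesis by (metis (no_types, lifting) sum.empty sum.insert_remove finite.emptyI empty_Diff add.right_neutral)
          qed
          finally show ?thesis .
        next
          case False
          then have "indicator {0<..<T-L} t = (0::ennreal)" by (auto simp: indicator_def)
          then show ?thesis by simp
        qed
      qed
    qed
  qed simp
  also have "(\<integral>\<^sup>+\<omega>. (\<integral>\<^sup>+t. (\<Sum>k. ?I k \<omega> t) \<partial>lborel) \<partial>M) = (\<integral>\<^sup>+\<omega>. (\<Sum>k. \<integral>\<^sup>+t. ?I k \<omega> t \<partial>lborel) \<partial>M)"
    by (intro nn_integral_cong nn_integral_suminf) (simp add: Hk_t_meas)
  also have "\<dots> = (\<Sum>k. \<integral>\<^sup>+\<omega>. (\<integral>\<^sup>+t. ?I k \<omega> t \<partial>lborel) \<partial>M)"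
    by (intro nn_integral_suminf meas_int Hk_meas)
  also have "lam * \<dots> = (\<Sum>k. lam * \<integral>\<^sup>+\<omega>. (\<integral>\<^sup>+t. ?I k \<omega> t \<partial>lborel) \<partial>M)"
    by simp
  also have "\<dots> = (\<Sum>k. \<integral>\<^sup>+\<omega>. ?adm k \<omega> \<partial>M)"
    by (simp add: Qk)
  also have "\<dots> = (\<integral>\<^sup>+\<omega>. (\<Sum>k. ?adm k \<omega>) \<partial>M)"
    by (intro nn_integral_suminf[symmetric] adm_meas)
  also have "\<dots> = (\<integral>\<^sup>+\<omega>. (\<Sum>k. indicator {\<omega>. admitted gap U x k \<omega>} \<omega> * indicator {..<T} (a k \<omega>) *
            ennreal (min (S k \<omega>) (T - a k \<omega>))) \<partial>M)"
  proof (rule nn_integral_cong_AE)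
    show "AE \<omega> in M. (\<Sum>k. ?adm k \<omega>) = (\<Sum>k. indicator {\<omega>. admitted gap U x k \<omega>} \<omega> * indicator {..<T} (a k \<omega>) *
            ennreal (min (S k \<omega>) (T - a k \<omega>)))"
      using AE_Om0
    proof (rule AE_mp, intro AE_I2 impI suminf_cong)
      fix \<omega> k assume w: "\<omega> \<in> Om0"
      have "ap k \<omega> < a k \<omega>" using w by (simp add: a_eq Om0_def)
      then have "enn2real (hh k (a k \<omega>, Z k \<omega>)) = x (a k \<omega>) \<omega>"
        by (rule hh_x_real[OF w]) simp
      then show "?adm k \<omega> = indicator {\<omega>. admitted gap U x k \<omega>} \<omega> * indicator {..<T} (a k \<omega>) *
            ennreal (min (S k \<omega>) (T - a k \<omega>))"
        by (simp add: admitted_def indicator_def)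
    qed
  qed
  also have "\<dots> \<le> (\<integral>\<^sup>+\<omega>. of_nat c * ennreal T \<partial>M)"
    by (rule nn_integral_mono_AE, rule AE_mp[OF AE_Om1 AE_I2]) (auto intro: pathwise[OF _ T])
  also have "\<dots> = of_nat c * ennreal T"
    using emeasure_space_1 by simp
  finally show ?thesis .
qed

end



context adm2 begin

lemma obs_meas: "f \<in> observables gap U S s \<Longrightarrow> f \<in> borel_measurable M"
proof -
  assume "f \<in> observables gap U S s"
  then obtain j where fj:
    "f = (\<lambda>\<omega>. if a j \<omega> \<le> s then 1 else 0) \<or>
     f = (\<lambda>\<omega>. if a j \<omega> \<le> s then a j \<omega> else 0) \<or>
     f = (\<lambda>\<omega>. if a j \<omega> \<le> s then U j \<omega> else 0) \<or>
     f = (\<lambda>\<omega>. if a j \<omega> \<le> s then min (S j \<omega>) (s - a j \<omega>) else 0)"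
    unfolding observables_def by blast
  have [measurable]: "U j \<in> borel_measurable M" "S j \<in> borel_measurable M" by (rule U_meas S_meas)+
  from fj show ?thesis by (elim disjE) simp_all
qed

lemma history_sub: "sets (history M gap U S s) \<subseteq> sets M"
  unfolding sets_history
  by (rule sets.sigma_sets_subset) (auto dest: obs_meas)

lemma sets_PR_sub: "sets PR \<subseteq> sets (borel \<Otimes>\<^sub>M M)"
proof
  fix E assume "E \<in> sets PR"
  then show "E \<in> sets (borel \<Otimes>\<^sub>M M)"
    unfolding sets_PR
  proof (induction rule: sigma_sets.induct)
    case (Basic E)
    then show ?case using history_sub by (auto intro!: pair_measureI)
  next
    case Empty then show ?case by simp
  next
    case (Compl E)
    have "{0::real..} \<times> space M \<in> sets (borel \<Otimes>\<^sub>M M)" by (intro pair_measureI) (auto intro: borel_closed[OF closed_atLeast])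
    then show ?case using Compl by auto
  next
    case (Union A) then show ?case by auto
  qed
qed

definition x0 :: "real \<times> 'a \<Rightarrow> real" where
  "x0 p = (if p \<in> {0..} \<times> space M then x (fst p) (snd p) else 0)"

lemma x0_meas[measurable]: "x0 \<in> borel_measurable (borel \<Otimes>\<^sub>M M)"
proof -
  let ?R = "restrict_space (borel \<Otimes>\<^sub>M M) ({0::real..} \<times> space M)"
  have sp: "({0::real..} \<times> space M) \<inter> space (borel \<Otimes>\<^sub>M M) \<in> sets (borel \<Otimes>\<^sub>M M)"
  proof -
    have "({0::real..} \<times> space M) \<inter> space (borel \<Otimes>\<^sub>M M) = {0..} \<times> space M" by (auto simp: space_pair_measure)
    moreover have "{0::real..} \<times> space M \<in> sets (borel \<Otimes>\<^sub>M M)" by (intro pair_measureI) (auto intro: borel_closed[OF closed_atLeast])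
    ultimately show ?thesis by simp
  qed
  have "sets PR \<subseteq> sets ?R"
  proof
    fix E assume E: "E \<in> sets PR"
    then have "E \<subseteq> {0..} \<times> space M" using sets.sets_into_space[OF E] by (simp add: space_PR)
    then show "E \<in> sets ?R" using sets_PR_sub E sets_restrict_space_iff[OF sp] by auto
  qed
  moreover have "space PR = space ?R" by (auto simp: space_PR space_restrict_space space_pair_measure)
  ultimately have "measurable PR borel \<subseteq> measurable ?R borel"
    by (intro measurable_mono) auto
  then have "(\<lambda>(t, \<omega>). x t \<omega>) \<in> borel_measurable ?R" using x_meas by blast
  then have "(\<lambda>p. if p \<in> {0::real..} \<times> space M then (\<lambda>(t, \<omega>). x t \<omega>) p else 0) \<in> borel_measurable (borel \<Otimes>\<^sub>M M)"
    by (subst measurable_restrict_space_iff[OF sp, symmetric]) auto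
  moreover have "x0 = (\<lambda>p. if p \<in> {0::real..} \<times> space M then (\<lambda>(t, \<omega>). x t \<omega>) p else 0)"
    by (auto simp: x0_def fun_eq_iff)
  ultimately show ?thesis by simp
qed

lemma x0_sect: "\<omega> \<in> space M \<Longrightarrow> (\<lambda>t. x0 (t, \<omega>)) \<in> borel_measurable borel"
  using measurable_compose[OF measurable_Pair2' x0_meas] by blast

lemma x0_eq: "0 \<le> t \<Longrightarrow> \<omega> \<in> space M \<Longrightarrow> x0 (t, \<omega>) = x t \<omega>"
  by (simp add: x0_def)

lemma x0_bounds: "0 \<le> x0 p \<and> x0 p \<le> 1"
  using x_bounds by (auto simp: x0_def)

lemma Xint_meas:
  "(\<lambda>\<omega>. \<integral>\<^sup>+t. indicator I t * ennreal (x0 (t, \<omega>)) \<partial>lborel) \<in> borel_measurable M" if "I \<in> sets borel"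
proof (rule lborel.borel_measurable_nn_integral)
  have "(\<lambda>q::'a \<times> real. indicator I (snd q) * ennreal (x0 (snd q, fst q))) \<in> borel_measurable (M \<Otimes>\<^sub>M borel)"
    using that by measurable
  moreover have "borel_measurable (M \<Otimes>\<^sub>M lborel) = borel_measurable (M \<Otimes>\<^sub>M (borel::real measure))"
    by (rule measurable_cong_sets) (auto intro: sets_pair_measure_cong)
  ultimately show "(\<lambda>(\<omega>, t). indicator I t * ennreal (x0 (t, \<omega>))) \<in> borel_measurable (M \<Otimes>\<^sub>M lborel)"
    by (simp add: split_beta')
qed

definition YY :: "real \<Rightarrow> 'a \<Rightarrow> ennreal" where
  "YY I \<omega> = (\<integral>\<^sup>+t. indicator {0..I} t * ennreal (x0 (t, \<omega>)) \<partial>lborel)"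

lemma key2:
  assumes T: "0 \<le> T" and L: "0 \<le> L" and LT: "L \<le> T"
  shows "lam * mE L * (\<integral>\<^sup>+\<omega>. YY T \<omega> \<partial>M) \<le> of_nat c * ennreal T + lam * mE L * ennreal L"
proof -
  have "(\<integral>\<^sup>+\<omega>. YY T \<omega> \<partial>M) \<le> (\<integral>\<^sup>+\<omega>. (\<integral>\<^sup>+t. indicator {0<..<T-L} t * ennreal (x0 (t, \<omega>)) \<partial>lborel) + ennreal L \<partial>M)"
  proof (rule nn_integral_mono)
    fix \<omega> assume w: "\<omega> \<in> space M"
    have [measurable]: "(\<lambda>t. x0 (t, \<omega>)) \<in> borel_measurable borel" by (rule x0_sect[OF w])
    have "YY T \<omega> \<le> (\<integral>\<^sup>+t. indicator {0<..<T-L} t * ennreal (x0 (t, \<omega>)) + (indicator {T-L..T} t + indicator {0} t) \<partial>lborel)"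
      unfolding YY_def
    proof (rule nn_integral_mono)
      fix t
      show "indicator {0..T} t * ennreal (x0 (t, \<omega>)) \<le> indicator {0<..<T-L} t * ennreal (x0 (t, \<omega>)) + (indicator {T-L..T} t + indicator {0} t)"
      proof -
        have e1: "ennreal (x0 (t, \<omega>)) \<le> 1" using x0_bounds[of "(t, \<omega>)"] by (simp add: ennreal_leI)
        show ?thesis
        proof (cases "t \<in> {0..T}")
          case False then show ?thesis by simp
        next
          case True
          then consider "t \<in> {0<..<T-L}" | "t \<in> {T-L..T}" | "t = 0" by fastforce
          then show ?thesis
          proof cases
            case 1 then show ?thesis using True by simp
          next
            case 2 then show ?thesis using True e1 by (simp add: add_increasing2)
          next
            case 3 then show ?thesis using True e1 by (simp add: add_increasing)
          qed
        qed
      qed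
    qed
    also have "\<dots> = (\<integral>\<^sup>+t. indicator {0<..<T-L} t * ennreal (x0 (t, \<omega>)) \<partial>lborel) + ((\<integral>\<^sup>+t. indicator {T-L..T} t \<partial>lborel) + (\<integral>\<^sup>+t. indicator {0::real} t \<partial>lborel))"
      by (simp add: nn_integral_add)
    also have "\<dots> = (\<integral>\<^sup>+t. indicator {0<..<T-L} t * ennreal (x0 (t, \<omega>)) \<partial>lborel) + ennreal L"
      using L by simp
    finally show "YY T \<omega> \<le> (\<integral>\<^sup>+t. indicator {0<..<T-L} t * ennreal (x0 (t, \<omega>)) \<partial>lborel) + ennreal L" .
  qed
  also have "\<dots> = (\<integral>\<^sup>+\<omega>. (\<integral>\<^sup>+t. indicator {0<..<T-L} t * ennreal (x0 (t, \<omega>)) \<partial>lborel) \<partial>M) + ennreal L"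
    using emeasure_space_1 by (subst nn_integral_add) (auto intro: Xint_meas)
  finally have 1: "lam * mE L * (\<integral>\<^sup>+\<omega>. YY T \<omega> \<partial>M) \<le>
      lam * mE L * (\<integral>\<^sup>+\<omega>. (\<integral>\<^sup>+t. indicator {0<..<T-L} t * ennreal (x0 (t, \<omega>)) \<partial>lborel) \<partial>M) + lam * mE L * ennreal L"
    by (subst distrib_left[symmetric]) (rule mult_left_mono, auto)
  have "lam * mE L * (\<integral>\<^sup>+\<omega>. (\<integral>\<^sup>+t. indicator {0<..<T-L} t * ennreal (x0 (t, \<omega>)) \<partial>lborel) \<partial>M) =
        lam * (\<integral>\<^sup>+\<omega>. mE L * (\<integral>\<^sup>+t. indicator {0<..<T-L} t * ennreal (x0 (t, \<omega>)) \<partial>lborel) \<partial>M)"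
    by (subst nn_integral_cmult) (auto intro: Xint_meas simp: mult.assoc)
  also have "\<dots> = lam * (\<integral>\<^sup>+\<omega>. (\<integral>\<^sup>+t. indicator {0<..<T-L} t * ennreal (x t \<omega>) * mE L \<partial>lborel) \<partial>M)"
  proof (intro arg_cong2[where f="(*)"] refl nn_integral_cong)
    fix \<omega> assume w: "\<omega> \<in> space M"
    have [measurable]: "(\<lambda>t. x0 (t, \<omega>)) \<in> borel_measurable borel" by (rule x0_sect[OF w])
    have "mE L * (\<integral>\<^sup>+t. indicator {0<..<T-L} t * ennreal (x0 (t, \<omega>)) \<partial>lborel) =
          (\<integral>\<^sup>+t. mE L * (indicator {0<..<T-L} t * ennreal (x0 (t, \<omega>))) \<partial>lborel)"
      by (subst nn_integral_cmult) auto
    also have "\<dots> = (\<integral>\<^sup>+t. indicator {0<..<T-L} t * ennreal (x t \<omega>) * mE L \<partial>lborel)"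
      using w by (intro nn_integral_cong) (auto simp: indicator_def x0_eq mult_ac)
    finally show "mE L * (\<integral>\<^sup>+t. indicator {0<..<T-L} t * ennreal (x0 (t, \<omega>)) \<partial>lborel) =
          (\<integral>\<^sup>+t. indicator {0<..<T-L} t * ennreal (x t \<omega>) * mE L \<partial>lborel)" .
  qed
  also have "\<dots> \<le> of_nat c * ennreal T" by (rule key_bound[OF T L])
  finally show ?thesis using 1 by (meson add_right_mono order_trans)
qed

end



lemma concave_bound:
  fixes g :: "real \<Rightarrow> real"
  assumes conc: "concave_on {0..1} g" and mono: "mono_on {0..1} g"
    and pq: "0 \<le> p" "p < q" "q \<le> 1" and y: "0 \<le> y" "y \<le> 1"
  shows "g y \<le> g q + ((g q - g p) / (q - p)) * (y - q) + (g q - g p)"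
proof -
  define \<mu> where "\<mu> = (g q - g p) / (q - p)"
  have cv: "convex_on {0..1} (\<lambda>x. - g x)" using conc by (simp add: concave_on_def)
  have \<mu>0: "0 \<le> \<mu>" using mono pq unfolding \<mu>_def mono_on_def by (auto intro!: divide_nonneg_pos)
  have \<mu>d: "\<mu> * (q - p) = g q - g p" using pq by (simp add: \<mu>_def)
  consider "y < p" | "p \<le> y \<and> y \<le> q" | "q < y" by linarith
  then show ?thesis
  proof cases
    case 1
    have "((- g y) - (- g q)) / (y - q) \<le> ((- g p) - (- g q)) / (p - q)"
      using convex_on_slope_le(2)[OF cv, of y q p] 1 pq y by auto
    moreover have "((- g y) - (- g q)) / (y - q) = - ((g q - g y) / (q - y))"
      by (subst divide_minus_right[symmetric]) simp
    moreover have "((- g p) - (- g q)) / (p - q) = - ((g q - g p) / (q - p))"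
      by (subst divide_minus_right[symmetric]) simp
    ultimately have "(g q - g y) / (q - y) \<ge> (g q - g p) / (q - p)" by linarith
    then have "\<mu> \<le> (g q - g y) / (q - y)" by (simp add: \<mu>_def)
    then have "\<mu> * (q - y) \<le> g q - g y" using 1 pq by (simp add: pos_le_divide_eq)
    moreover have "\<mu> * (y - q) = - (\<mu> * (q - y))" by (simp add: algebra_simps)
    moreover have "0 \<le> \<mu> * (q - p)" using \<mu>0 pq by simp
    ultimately show ?thesis using \<mu>d unfolding \<mu>_def[symmetric] by linarith
  next
    case 2
    then have "g y \<le> g q" using mono pq y unfolding mono_on_def by auto
    moreover have "\<mu> * (y - q) + \<mu> * (q - p) = \<mu> * (y - p)" by (simp add: algebra_simps)
    moreover have "0 \<le> \<mu> * (y - p)" using 2 \<mu>0 by simp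
    ultimately show ?thesis using \<mu>d unfolding \<mu>_def[symmetric] by linarith
  next
    case 3
    have "((- g p) - (- g q)) / (p - q) \<le> ((- g q) - (- g y)) / (q - y)"
      using convex_on_slope_le[OF cv, of p y q] 3 pq y by auto
    moreover have "((- g p) - (- g q)) / (p - q) = - ((g q - g p) / (q - p))"
      by (subst divide_minus_right[symmetric]) simp
    moreover have "((- g q) - (- g y)) / (q - y) = - ((g y - g q) / (y - q))"
      by (subst divide_minus_right[symmetric]) simp
    ultimately have "(g y - g q) / (y - q) \<le> (g q - g p) / (q - p)" by linarith
    then have "(g y - g q) / (y - q) \<le> \<mu>" by (simp add: \<mu>_def)
    then have "g y - g q \<le> \<mu> * (y - q)" using 3 by (simp add: pos_divide_le_eq)
    moreover have "0 \<le> \<mu> * (q - p)" using \<mu>0 pq by simp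
    ultimately show ?thesis using \<mu>d unfolding \<mu>_def[symmetric] by linarith
  qed
qed

lemma integral_le_enn2real:
  fixes f :: "'b \<Rightarrow> real"
  assumes "\<And>x. x \<in> space N \<Longrightarrow> 0 \<le> f x"
  shows "integral\<^sup>L N f \<le> enn2real (\<integral>\<^sup>+x. ennreal (f x) \<partial>N)"
proof (cases "integrable N f")
  case True
  then have "(\<integral>\<^sup>+x. ennreal (f x) \<partial>N) = ennreal (integral\<^sup>L N f)"
    using assms by (intro nn_integral_eq_integral) auto
  moreover have "0 \<le> integral\<^sup>L N f" using assms by (intro integral_nonneg_AE AE_I2) auto
  ultimately show ?thesis by simp
next
  case False
  then show ?thesis by (simp add: not_integrable_integral_eq)
qed




locale adm3 = adm2 M lam gap U S c x G for M :: "'a measure" and lam gap U S c x G +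
  fixes g :: "real \<Rightarrow> real" and d :: real
  assumes g_concave: "concave_on {0..1} g" and g_mono: "mono_on {0..1} g"
    and g_cont: "continuous_on {0..1} g" and g0: "g 0 = 0"
    and d_int: "integrable G (\<lambda>s. s)" and d_eq: "d = integral\<^sup>L G (\<lambda>s. s)" and d_pos: "d > 0"
    and xstar: "real c / (lam * d) < 1"
begin

lemma G_AE_pos: "AE s in G. 0 < s"
proof -
  interpret G: prob_space G by (rule G_prob)
  have sets: "{..0::real} \<in> sets G" by (simp add: G_sets)
  have "emeasure G {..0} = 0" using G0 sets by (simp add: G.emeasure_eq_measure)
  then show ?thesis using sets by (intro AE_I[where N="{..0}"]) auto
qed

lemma intG: "(\<integral>\<^sup>+s. ennreal s \<partial>G) = ennreal d"
proof -
  have "(\<integral>\<^sup>+s. ennreal s \<partial>G) = ennreal (integral\<^sup>L G (\<lambda>s. s))"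
    using G_AE_pos by (intro nn_integral_eq_integral d_int) (auto elim: AE_mp)
  then show ?thesis by (simp add: d_eq)
qed

lemma mE_le_d: "mE L \<le> ennreal d"
  unfolding mE_def intG[symmetric] by (intro nn_integral_mono) (auto intro: ennreal_leI)

lemma SUP_min: "(SUP n::nat. ennreal (min s (real n))) = ennreal s"
proof (rule antisym)
  show "(SUP n::nat. ennreal (min s (real n))) \<le> ennreal s" by (intro SUP_least ennreal_leI) auto
  obtain n :: nat where "s \<le> real n" using real_arch_simple by blast
  then have "ennreal s = ennreal (min s (real n))" by simp
  also have "\<dots> \<le> (SUP n::nat. ennreal (min s (real n)))" by (rule SUP_upper) simp
  finally show "ennreal s \<le> (SUP n::nat. ennreal (min s (real n)))" .
qed

lemma mE_approx:
  assumes "m < d"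
  shows "\<exists>n::nat. ennreal m < mE (real n)"
proof -
  have meas: "(\<lambda>s. ennreal (min s (real n))) \<in> borel_measurable G" for n
    by (simp add: measurable_cong_sets[OF G_sets refl])
  have "(SUP n::nat. mE (real n)) = (\<integral>\<^sup>+s. (SUP n::nat. ennreal (min s (real n))) \<partial>G)"
    unfolding mE_def
    by (rule nn_integral_monotone_convergence_SUP[symmetric])
       (auto simp: incseq_def le_fun_def intro!: ennreal_leI meas)
  also have "\<dots> = ennreal d" by (simp add: SUP_min intG)
  finally have "ennreal m < (SUP n::nat. mE (real n))"
    using assms d_pos by (cases "0 \<le> m") (auto simp: ennreal_lessI ennreal_neg)
  then show ?thesis by (simp add: less_SUP_iff)
qed

lemma FLU_eq: "FLU lam d c g = lam * g (real c / (lam * d))"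
proof -
  let ?xs = "real c / (lam * d)"
  have xs: "0 \<le> ?xs" "?xs \<le> 1" using xstar lam d_pos by auto
  have in_set: "y \<in> {y \<in> {0..1}. lam * y * d \<le> real c} \<longleftrightarrow> 0 \<le> y \<and> y \<le> 1 \<and> y \<le> ?xs" for y
    using lam d_pos by (auto simp: pos_le_divide_eq mult_ac)
  show ?thesis unfolding FLU_def
  proof (rule cSup_eq_maximum)
    show "lam * g ?xs \<in> (\<lambda>y. lam * g y) ` {y \<in> {0..1}. lam * y * d \<le> real c}"
      using in_set[of ?xs] xs by auto
  next
    fix z assume "z \<in> (\<lambda>y. lam * g y) ` {y \<in> {0..1}. lam * y * d \<le> real c}"
    then obtain y where y: "0 \<le> y" "y \<le> 1" "y \<le> ?xs" and z: "z = lam * g y" using in_set by auto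
    have "g y \<le> g ?xs" using g_mono y xs unfolding mono_on_def by auto
    then show "z \<le> lam * g ?xs" using lam z by simp
  qed
qed

lemma g_nonneg: "0 \<le> y \<Longrightarrow> y \<le> 1 \<Longrightarrow> 0 \<le> g y"
  using g_mono g0 unfolding mono_on_def by (metis atLeastAtMost_iff order_refl zero_le_one)

definition gc :: "real \<Rightarrow> real" where "gc y = g (max 0 (min 1 y))"

lemma gc_meas[measurable]: "gc \<in> borel_measurable borel"
proof -
  have "continuous_on UNIV (\<lambda>y::real. max 0 (min 1 y))" by (intro continuous_intros)
  moreover have "(\<lambda>y::real. max 0 (min 1 y)) ` UNIV \<subseteq> {0..1}" by auto
  ultimately have "continuous_on UNIV gc" unfolding gc_def
    using continuous_on_compose2[OF g_cont] by blast
  then show ?thesis by (rule borel_measurable_continuous_onI)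
qed

lemma gc_eq: "0 \<le> y \<Longrightarrow> y \<le> 1 \<Longrightarrow> gc y = g y"
  by (simp add: gc_def)

lemma YY_le: "YY T \<omega> \<le> ennreal T" if "0 \<le> T"
proof -
  have "YY T \<omega> \<le> (\<integral>\<^sup>+t. indicator {0..T} t \<partial>lborel)"
    unfolding YY_def using x0_bounds
    by (intro nn_integral_mono) (auto simp: indicator_def ennreal_leI)
  then show ?thesis using that by simp
qed

lemma inner_bound:
  assumes w: "\<omega> \<in> space M" and T: "0 \<le> T" and pq: "0 \<le> p" "p < q" "q \<le> 1"
  defines "\<mu> \<equiv> (g q - g p) / (q - p)"
  defines "C \<equiv> g q - \<mu> * q + (g q - g p)"
  shows "(\<integral>t\<in>{0..T}. lam * g (x t \<omega>) \<partial>lborel) \<le> lam * C * T + lam * \<mu> * enn2real (YY T \<omega>)"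
    and "0 \<le> (\<integral>t\<in>{0..T}. lam * g (x t \<omega>) \<partial>lborel)"
proof -
  have cb: "g y \<le> C + \<mu> * y" if "0 \<le> y" "y \<le> 1" for y
  proof -
    have "g q + \<mu> * (y - q) + (g q - g p) = C + \<mu> * y" by (simp add: C_def algebra_simps)
    then show ?thesis using concave_bound[OF g_concave g_mono pq that, folded \<mu>_def] by linarith
  qed
  have C0: "0 \<le> C" using cb[of 0] g0 by simp
  have \<mu>0: "0 \<le> \<mu>" using g_mono pq unfolding \<mu>_def mono_on_def by (auto intro!: divide_nonneg_pos)
  have [measurable]: "(\<lambda>t. x0 (t, \<omega>)) \<in> borel_measurable borel" by (rule x0_sect[OF w])
  have yt: "YY T \<omega> < top" using YY_le[OF T, of \<omega>] by (metis ennreal_less_top le_less_trans)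
  let ?f = "\<lambda>t. indicator {0..T} t * (lam * gc (x0 (t, \<omega>)))"
  have eq: "(\<integral>t\<in>{0..T}. lam * g (x t \<omega>) \<partial>lborel) = integral\<^sup>L lborel ?f"
    unfolding set_lebesgue_integral_def
    using w x0_bounds by (intro Bochner_Integration.integral_cong) (auto simp: indicator_def x0_eq gc_eq)
  have f0: "0 \<le> ?f t" for t
    using x0_bounds[of "(t, \<omega>)"] lam g_nonneg by (auto simp: indicator_def gc_eq)
  have "integral\<^sup>L lborel ?f = enn2real (\<integral>\<^sup>+t. ennreal (?f t) \<partial>lborel)"
    using f0 by (intro integral_eq_nn_integral) auto
  also have "\<dots> \<le> enn2real (ennreal (lam * C * T) + ennreal (lam * \<mu>) * YY T \<omega>)"
  proof (rule enn2real_mono)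
    have "(\<integral>\<^sup>+t. ennreal (?f t) \<partial>lborel) \<le>
          (\<integral>\<^sup>+t. ennreal (lam * C) * indicator {0..T} t + ennreal (lam * \<mu>) * (indicator {0..T} t * ennreal (x0 (t, \<omega>))) \<partial>lborel)"
    proof (rule nn_integral_mono)
      fix t
      show "ennreal (?f t) \<le> ennreal (lam * C) * indicator {0..T} t + ennreal (lam * \<mu>) * (indicator {0..T} t * ennreal (x0 (t, \<omega>)))"
      proof (cases "t \<in> {0..T}")
        case True
        have "?f t = lam * g (x0 (t, \<omega>))" using True x0_bounds[of "(t, \<omega>)"] by (simp add: gc_eq)
        also have "\<dots> \<le> lam * (C + \<mu> * x0 (t, \<omega>))" using cb x0_bounds[of "(t, \<omega>)"] lam by simp
        finally have "ennreal (?f t) \<le> ennreal (lam * C + lam * \<mu> * x0 (t, \<omega>))"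
          by (intro ennreal_leI) (simp add: algebra_simps)
        also have "\<dots> = ennreal (lam * C) + ennreal (lam * \<mu>) * ennreal (x0 (t, \<omega>))"
          using lam C0 \<mu>0 x0_bounds[of "(t, \<omega>)"] by (simp add: ennreal_plus ennreal_mult)
        finally show ?thesis using True by simp
      qed simp
    qed
    also have "\<dots> = ennreal (lam * C) * ennreal T + ennreal (lam * \<mu>) * YY T \<omega>"
      unfolding YY_def using T by (subst nn_integral_add) (auto simp: nn_integral_cmult)
    also have "\<dots> = ennreal (lam * C * T) + ennreal (lam * \<mu>) * YY T \<omega>"
      using lam C0 T by (simp add: ennreal_mult)
    finally show "(\<integral>\<^sup>+t. ennreal (?f t) \<partial>lborel) \<le> ennreal (lam * C * T) + ennreal (lam * \<mu>) * YY T \<omega>" .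
    show "ennreal (lam * C * T) + ennreal (lam * \<mu>) * YY T \<omega> < top"
      using yt by (simp add: ennreal_mult_less_top)
  qed
  also have "\<dots> = lam * C * T + lam * \<mu> * enn2real (YY T \<omega>)"
    using yt lam C0 \<mu>0 T
    by (subst enn2real_plus) (auto simp: enn2real_mult ennreal_mult_less_top)
  finally show "(\<integral>t\<in>{0..T}. lam * g (x t \<omega>) \<partial>lborel) \<le> lam * C * T + lam * \<mu> * enn2real (YY T \<omega>)"
    using eq by simp
  show "0 \<le> (\<integral>t\<in>{0..T}. lam * g (x t \<omega>) \<partial>lborel)"
    using eq f0 by (simp add: integral_nonneg)
qed

end



context adm3 begin

lemma YY_meas[measurable]: "YY T \<in> borel_measurable M"
  unfolding YY_def[abs_def] by (rule Xint_meas) simp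

lemma EYY_le: "0 \<le> T \<Longrightarrow> (\<integral>\<^sup>+\<omega>. YY T \<omega> \<partial>M) \<le> ennreal T"
proof -
  assume T: "0 \<le> T"
  have "(\<integral>\<^sup>+\<omega>. YY T \<omega> \<partial>M) \<le> (\<integral>\<^sup>+\<omega>. ennreal T \<partial>M)" by (intro nn_integral_mono YY_le T)
  then show ?thesis using emeasure_space_1 by simp
qed

lemma outer_bound:
  assumes T: "0 \<le> T" and pq: "0 \<le> p" "p < q" "q \<le> 1"
  defines "\<mu> \<equiv> (g q - g p) / (q - p)"
  defines "C \<equiv> g q - \<mu> * q + (g q - g p)"
  shows "integral\<^sup>L M (\<lambda>\<omega>. \<integral>t\<in>{0..T}. lam * g (x t \<omega>) \<partial>lborel) \<le>
         lam * C * T + lam * \<mu> * enn2real (\<integral>\<^sup>+\<omega>. YY T \<omega> \<partial>M)"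
proof -
  have cb: "g y \<le> C + \<mu> * y" if "0 \<le> y" "y \<le> 1" for y
  proof -
    have "g q + \<mu> * (y - q) + (g q - g p) = C + \<mu> * y" by (simp add: C_def algebra_simps)
    then show ?thesis using concave_bound[OF g_concave g_mono pq that, folded \<mu>_def] by linarith
  qed
  have C0: "0 \<le> C" using cb[of 0] g0 by simp
  have \<mu>0: "0 \<le> \<mu>" using g_mono pq unfolding \<mu>_def mono_on_def by (auto intro!: divide_nonneg_pos)
  have E_fin: "(\<integral>\<^sup>+\<omega>. YY T \<omega> \<partial>M) < top" using EYY_le[OF T] by (metis ennreal_less_top le_less_trans)
  let ?F = "\<lambda>\<omega>. \<integral>t\<in>{0..T}. lam * g (x t \<omega>) \<partial>lborel"
  have "integral\<^sup>L M ?F \<le> enn2real (\<integral>\<^sup>+\<omega>. ennreal (?F \<omega>) \<partial>M)"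
    by (rule integral_le_enn2real) (rule inner_bound(2)[OF _ T pq])
  also have "\<dots> \<le> enn2real (ennreal (lam * C * T) + ennreal (lam * \<mu>) * (\<integral>\<^sup>+\<omega>. YY T \<omega> \<partial>M))"
  proof (rule enn2real_mono)
    have "(\<integral>\<^sup>+\<omega>. ennreal (?F \<omega>) \<partial>M) \<le> (\<integral>\<^sup>+\<omega>. ennreal (lam * C * T) + ennreal (lam * \<mu>) * YY T \<omega> \<partial>M)"
    proof (rule nn_integral_mono)
      fix \<omega> assume w: "\<omega> \<in> space M"
      have yt: "YY T \<omega> < top" using YY_le[OF T, of \<omega>] by (metis ennreal_less_top le_less_trans)
      have "ennreal (?F \<omega>) \<le> ennreal (lam * C * T + lam * \<mu> * enn2real (YY T \<omega>))"
        using inner_bound(1)[OF w T pq] by (intro ennreal_leI) (simp add: \<mu>_def C_def)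
      also have "\<dots> = ennreal (lam * C * T) + ennreal (lam * \<mu>) * YY T \<omega>"
      proof -
        have ee: "ennreal (enn2real (YY T \<omega>)) = YY T \<omega>" using yt by simp
        have "ennreal (lam * C * T + lam * \<mu> * enn2real (YY T \<omega>)) =
              ennreal (lam * C * T) + ennreal (lam * \<mu> * enn2real (YY T \<omega>))"
          by (rule ennreal_plus) (use lam C0 \<mu>0 T in auto)
        also have "ennreal (lam * \<mu> * enn2real (YY T \<omega>)) = ennreal (lam * \<mu>) * ennreal (enn2real (YY T \<omega>))"
          by (rule ennreal_mult) (use lam \<mu>0 in auto)
        finally have "ennreal (lam * C * T + lam * \<mu> * enn2real (YY T \<omega>)) =
              ennreal (lam * C * T) + ennreal (lam * \<mu>) * ennreal (enn2real (YY T \<omega>))" .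
        then show ?thesis using ee by simp
      qed
      finally show "ennreal (?F \<omega>) \<le> ennreal (lam * C * T) + ennreal (lam * \<mu>) * YY T \<omega>" .
    qed
    also have "\<dots> = ennreal (lam * C * T) + ennreal (lam * \<mu>) * (\<integral>\<^sup>+\<omega>. YY T \<omega> \<partial>M)"
      using emeasure_space_1 by (subst nn_integral_add) (auto simp: nn_integral_cmult)
    finally show "(\<integral>\<^sup>+\<omega>. ennreal (?F \<omega>) \<partial>M) \<le> ennreal (lam * C * T) + ennreal (lam * \<mu>) * (\<integral>\<^sup>+\<omega>. YY T \<omega> \<partial>M)" .
    show "ennreal (lam * C * T) + ennreal (lam * \<mu>) * (\<integral>\<^sup>+\<omega>. YY T \<omega> \<partial>M) < top"
      using E_fin by (simp add: ennreal_mult_less_top)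
  qed
  also have "\<dots> = lam * C * T + lam * \<mu> * enn2real (\<integral>\<^sup>+\<omega>. YY T \<omega> \<partial>M)"
    using E_fin lam C0 \<mu>0 T
    by (subst enn2real_plus) (auto simp: enn2real_mult ennreal_mult_less_top)
  finally show ?thesis .
qed

lemma EY_bound:
  assumes L: "0 \<le> L" and LT: "L \<le> T" and mL: "0 < enn2real (mE L)"
  shows "enn2real (\<integral>\<^sup>+\<omega>. YY T \<omega> \<partial>M) \<le> real c * T / (lam * enn2real (mE L)) + L"
proof -
  have T: "0 \<le> T" using L LT by linarith
  define EY where "EY = enn2real (\<integral>\<^sup>+\<omega>. YY T \<omega> \<partial>M)"
  define m where "m = enn2real (mE L)"
  have E_fin: "(\<integral>\<^sup>+\<omega>. YY T \<omega> \<partial>M) < top" using EYY_le[OF T] by (metis ennreal_less_top le_less_trans)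
  have E_eq: "(\<integral>\<^sup>+\<omega>. YY T \<omega> \<partial>M) = ennreal EY" using E_fin by (simp add: EY_def ennreal_enn2real_if)
  have m_eq: "mE L = ennreal m"
  proof -
    have "mE L < top" using mE_le_d[of L] by (metis ennreal_less_top le_less_trans)
    then show ?thesis by (simp add: m_def ennreal_enn2real_if)
  qed
  have m0: "0 < m" using mL by (simp add: m_def)
  have EY0: "0 \<le> EY" by (simp add: EY_def)
  have h1: "ennreal lam * ennreal m * ennreal EY = ennreal (lam * m * EY)"
    using lam m0 EY0 by (simp add: ennreal_mult)
  have h2: "of_nat c * ennreal T + ennreal lam * ennreal m * ennreal L = ennreal (real c * T + lam * m * L)"
    using lam m0 L T by (simp add: ennreal_mult ennreal_plus ennreal_of_nat_eq_real_of_nat)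
  have "ennreal (lam * m * EY) \<le> ennreal (real c * T + lam * m * L)"
    using key2[OF T L LT] unfolding E_eq m_eq h1 h2 .
  then have "lam * m * EY \<le> real c * T + lam * m * L"
    using lam m0 L T by (subst (asm) ennreal_le_iff) auto
  then have "EY \<le> (real c * T + lam * m * L) / (lam * m)"
    using lam m0 by (simp add: pos_le_divide_eq mult_ac)
  also have "\<dots> = real c * T / (lam * m) + L"
    using lam m0 by (simp add: add_divide_distrib)
  finally show ?thesis by (simp add: EY_def m_def)
qed

end



context adm3 begin

lemma case_c0:
  assumes c0: "c = 0"
  shows "integral\<^sup>L M (\<lambda>\<omega>. \<integral>t\<in>{0..T}. lam * g (x t \<omega>) \<partial>lborel) = 0"
proof (rule integral_eq_zero_AE)
  show "AE \<omega> in M. (\<integral>t\<in>{0..T}. lam * g (x t \<omega>) \<partial>lborel) = 0"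
    using AE_Om1
  proof (rule AE_mp, intro AE_I2 impI)
    fix \<omega> assume w: "\<omega> \<in> Om1"
    have "\<forall>t\<ge>0. c \<le> busy gap U S x t \<omega> \<longrightarrow> x t \<omega> = 0" using w by (simp add: Om1_def)
    then have "\<forall>t\<ge>0. x t \<omega> = 0" using c0 by simp
    then have "\<forall>t. t \<in> {0..T} \<longrightarrow> lam * g (x t \<omega>) = 0"
      using g0 by auto
    then have "(\<integral>t\<in>{0..T}. lam * g (x t \<omega>) \<partial>lborel) = (\<integral>t\<in>{0..T}. 0 \<partial>lborel)"
      by (intro set_lebesgue_integral_cong) auto
    then show "(\<integral>t\<in>{0..T}. lam * g (x t \<omega>) \<partial>lborel) = 0"
      by (simp add: set_lebesgue_integral_def)
  qed
qed

lemma eventually_bound: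
  assumes c0: "c > 0" and e: "e > 0"
  shows "eventually (\<lambda>T::real. (1 / T) * integral\<^sup>L M (\<lambda>\<omega>. \<integral>t\<in>{0..T}. lam * g (x t \<omega>) \<partial>lborel)
                      \<le> lam * g (real c / (lam * d)) + e) at_top"
proof -
  define q where "q = real c / (lam * d)"
  have q0: "0 < q" and q1: "q < 1" using c0 lam d_pos xstar by (auto simp: q_def)
  have "\<exists>\<delta>>0. \<forall>y\<in>{0..1}. dist y q < \<delta> \<longrightarrow> dist (g y) (g q) < e / (3 * lam)"
    using g_cont q0 q1 e lam unfolding continuous_on_iff by auto
  then obtain \<delta>0 where \<delta>0: "\<delta>0 > 0" "\<And>y. y \<in> {0..1} \<Longrightarrow> dist y q < \<delta>0 \<Longrightarrow> dist (g y) (g q) < e / (3 * lam)"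
    by blast
  define \<delta> where "\<delta> = min (\<delta>0 / 2) (q / 2)"
  define p where "p = q - \<delta>"
  have \<delta>pos: "0 < \<delta>" using \<delta>0 q0 by (simp add: \<delta>_def)
  have pq: "0 \<le> p" "p < q" "q \<le> 1" using \<delta>pos q1 by (auto simp: p_def \<delta>_def)
  have "dist (g p) (g q) < e / (3 * lam)"
    using \<delta>0(2)[of p] pq \<delta>0(1) by (auto simp: p_def \<delta>_def dist_real_def)
  moreover have "g p \<le> g q" using g_mono pq unfolding mono_on_def by auto
  ultimately have gqp: "lam * (g q - g p) < e / 3"
    using lam by (auto simp: dist_real_def field_simps)
  define \<mu> where "\<mu> = (g q - g p) / (q - p)"
  define C where "C = g q - \<mu> * q + (g q - g p)"
  have \<mu>0: "0 \<le> \<mu>" using g_mono pq unfolding \<mu>_def mono_on_def by (auto intro!: divide_nonneg_pos)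
  have den: "0 < 3 * (\<mu> * real c + 1)"
  proof -
    have "0 \<le> \<mu> * real c" using \<mu>0 by simp
    then show ?thesis by (intro mult_pos_pos; linarith)
  qed
  define \<eta> where "\<eta> = e / (3 * (\<mu> * real c + 1))"
  have \<eta>0: "0 < \<eta>" unfolding \<eta>_def using e den by simp
  define m0 where "m0 = 1 / (1 / d + \<eta>)"
  have "0 < 1 / d" using d_pos by simp
  then have s0: "0 < 1 / d + \<eta>" using \<eta>0 by linarith
  have m0pos: "0 < m0" using s0 by (simp add: m0_def)
  have m0d: "m0 < d"
  proof -
    have "1 / d < 1 / d + \<eta>" using \<eta>0 by simp
    then have "1 / (1 / d + \<eta>) < 1 / (1 / d)" using d_pos s0 by (intro divide_strict_left_mono) (simp_all add: divide_pos_pos)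
    then show ?thesis by (simp add: m0_def)
  qed
  obtain n :: nat where n: "ennreal m0 < mE (real n)" using mE_approx[OF m0d] by blast
  define L where "L = real n"
  define mL where "mL = enn2real (mE L)"
  have mE_fin: "mE L < top" using mE_le_d[of L] by (metis ennreal_less_top le_less_trans)
  have m0mL: "m0 < mL"
  proof -
    have "ennreal m0 < ennreal mL" using n mE_fin by (simp add: mL_def L_def)
    then show ?thesis using m0pos by (subst (asm) ennreal_less_iff) auto
  qed
  have mLpos: "0 < mL" using m0mL m0pos by linarith
  have L0: "0 \<le> L" by (simp add: L_def)
  have key_ii: "\<mu> * (real c / mL) - \<mu> * (real c / d) \<le> e / 3"
  proof -
    have "real c / mL \<le> real c / m0" using m0mL m0pos by (intro divide_left_mono) auto
    also have "\<dots> = real c / d + real c * \<eta>" by (simp add: m0_def algebra_simps)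
    finally have "real c / mL - real c / d \<le> real c * \<eta>" by simp
    then have "\<mu> * (real c / mL - real c / d) \<le> \<mu> * (real c * \<eta>)"
      using \<mu>0 by (rule mult_left_mono)
    then have 1: "\<mu> * (real c / mL) - \<mu> * (real c / d) \<le> \<mu> * (real c * \<eta>)"
      by (simp only: right_diff_distrib)
    have "\<mu> * (real c * \<eta>) = (\<mu> * real c * e) / (3 * (\<mu> * real c + 1))"
      by (simp add: \<eta>_def)
    also have "\<dots> \<le> e / 3"
    proof -
      have "\<mu> * real c * e \<le> e / 3 * (3 * (\<mu> * real c + 1))"
        using e by (simp add: algebra_simps)
      then show ?thesis by (rule pos_divide_le_eq[OF den, THEN iffD2])
    qed
    finally show ?thesis using 1 by linarith
  qed
  define T0 where "T0 = max (max L 1) (3 * lam * \<mu> * L / e + 1)"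
  show ?thesis
    unfolding eventually_at_top_linorder
  proof (intro exI[of _ T0] allI impI)
    fix T assume T: "T0 \<le> T"
    have TL: "L \<le> T" and T1: "1 \<le> T" and Tb: "3 * lam * \<mu> * L / e + 1 \<le> T"
      using T by (auto simp: T0_def)
    have Tpos: "0 < T" using T1 by simp
    have I: "integral\<^sup>L M (\<lambda>\<omega>. \<integral>t\<in>{0..T}. lam * g (x t \<omega>) \<partial>lborel) \<le>
        lam * C * T + lam * \<mu> * enn2real (\<integral>\<^sup>+\<omega>. YY T \<omega> \<partial>M)"
      using outer_bound[OF _ pq] Tpos by (simp add: \<mu>_def C_def)
    have EY: "enn2real (\<integral>\<^sup>+\<omega>. YY T \<omega> \<partial>M) \<le> real c * T / (lam * mL) + L"
      using EY_bound[OF L0 TL] mLpos by (simp add: mL_def)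
    have "lam * \<mu> * enn2real (\<integral>\<^sup>+\<omega>. YY T \<omega> \<partial>M) \<le> lam * \<mu> * (real c * T / (lam * mL) + L)"
      using EY lam \<mu>0 by (intro mult_left_mono) auto
    with I have I2: "integral\<^sup>L M (\<lambda>\<omega>. \<integral>t\<in>{0..T}. lam * g (x t \<omega>) \<partial>lborel) \<le>
        lam * C * T + lam * \<mu> * (real c * T / (lam * mL) + L)" by linarith
    have eq: "(1 / T) * (lam * C * T + lam * \<mu> * (real c * T / (lam * mL) + L)) =
        lam * C + \<mu> * (real c / mL) + lam * \<mu> * L / T"
      using Tpos lam mLpos by (simp add: field_simps)
    have iii: "lam * \<mu> * L / T \<le> e / 3"
    proof -
      have "3 * lam * \<mu> * L / e \<le> T" using Tb by linarith
      then have "3 * lam * \<mu> * L \<le> T * e" using e by (simp add: pos_divide_le_eq)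
      then have "lam * \<mu> * L \<le> e / 3 * T" by (simp add: algebra_simps)
      then show ?thesis using Tpos by (simp add: pos_divide_le_eq)
    qed
    have lC: "lam * C = lam * g q - \<mu> * (real c / d) + lam * (g q - g p)"
      using lam d_pos by (simp add: C_def q_def field_simps)
    have "(1 / T) * integral\<^sup>L M (\<lambda>\<omega>. \<integral>t\<in>{0..T}. lam * g (x t \<omega>) \<partial>lborel) \<le>
        (1 / T) * (lam * C * T + lam * \<mu> * (real c * T / (lam * mL) + L))"
      using I2 Tpos by (intro mult_left_mono) auto
    also have "\<dots> \<le> lam * g q + e" using eq lC gqp key_ii iii by linarith
    finally show "(1 / T) * integral\<^sup>L M (\<lambda>\<omega>. \<integral>t\<in>{0..T}. lam * g (x t \<omega>) \<partial>lborel) \<le>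
        lam * g (real c / (lam * d)) + e" by (simp add: q_def)
  qed
qed

lemma final:
  "ereal (FLU lam d c g) \<ge>
     Liminf at_top (\<lambda>T::real. ereal ((1 / T) *
       integral\<^sup>L M (\<lambda>\<omega>. \<integral>t\<in>{0..T}. lam * g (x t \<omega>) \<partial>lborel)))"
proof -
  let ?R = "\<lambda>T::real. ereal ((1 / T) * integral\<^sup>L M (\<lambda>\<omega>. \<integral>t\<in>{0..T}. lam * g (x t \<omega>) \<partial>lborel))"
  have LL: "Liminf at_top ?R \<le> Limsup at_top ?R"
    by (rule Liminf_le_Limsup) simp
  show ?thesis
  proof (cases "c = 0")
    case True
    have R0: "?R T = ereal 0" for T unfolding case_c0[OF True] by simp
    have lim0: "Limsup at_top ?R \<le> ereal 0"
      by (rule Limsup_bounded, rule always_eventually, rule allI, subst R0, rule order_refl)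
    have F0: "ereal (FLU lam d c g) = ereal 0" using FLU_eq True g0 by simp
    show ?thesis unfolding F0 by (rule order_trans[OF LL lim0])
  next
    case False
    then have c0: "c > 0" by simp
    show ?thesis
    proof (rule ereal_le_epsilon2)
      fix e :: real assume e: "0 < e"
      have "Limsup at_top ?R \<le> ereal (lam * g (real c / (lam * d)) + e)"
        by (rule Limsup_bounded) (use eventually_bound[OF c0 e] in \<open>auto elim!: eventually_mono\<close>)
      then show "Liminf at_top ?R \<le> ereal (FLU lam d c g) + ereal e"
        using LL by (simp add: FLU_eq)
    qed
  qed
qed

end

theorem lemma1:
  fixes M :: "'a measure" and lam d :: real and c :: nat and g :: "real \<Rightarrow> real"
    and G :: "real measure" and gap U S :: "nat \<Rightarrow> 'a \<Rightarrow> real" and x :: "real \<Rightarrow> 'a \<Rightarrow> real"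
  assumes M: "prob_space M"
    and lam: "lam > 0"
    and g_concave: "concave_on {0..1} g" and g_mono: "mono_on {0..1} g"
    and g_cont: "continuous_on {0..1} g" and g0: "g 0 = 0"
    and G: "prob_space G" "sets G = sets borel" "measure G {..0} = 0"
    and d: "integrable G (\<lambda>s. s)" "d = integral\<^sup>L G (\<lambda>s. s)" "d > 0"
    and xstar: "real c / (lam * d) < 1"
    and gap_exp: "\<And>k. distributed M lborel (gap k) (exponential_density lam)"
    and U_unif: "\<And>k. distributed M lborel (U k) (indicator {0..1})"
    and S_dist: "\<And>k. S k \<in> borel_measurable M" "\<And>k. distr M borel (S k) = G"
    and indep: "prob_space.indep_vars M (\<lambda>_. borel)
                  (\<lambda>i. case i of Inl k \<Rightarrow> gap k | Inr (Inl k) \<Rightarrow> U k | Inr (Inr k) \<Rightarrow> S k) UNIV"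
    and policy: "feasible_policy M c gap U S x"
  shows "ereal (FLU lam d c g) \<ge>
           Liminf at_top (\<lambda>T::real. ereal ((1 / T) *
             integral\<^sup>L M (\<lambda>\<omega>. \<integral>t\<in>{0..T}. lam * g (x t \<omega>) \<partial>lborel)))"
proof -
  have Um: "\<And>k. U k \<in> borel_measurable M"
    using distributed_measurable[OF U_unif] by simp
  have "adm3 M lam gap U S c x G g d"
    by (intro adm3.intro adm2.intro adm.intro adm2_axioms.intro adm3_axioms.intro)
       (fact M lam gap_exp Um indep U_unif G S_dist policy g_concave g_mono g_cont g0 d xstar)+
  then interpret adm3 M lam gap U S c x G g d .
  show ?thesis by (rule final)
qed

end
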